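(* Let $\mathcal{Q}$ be a poset and let $\mathfrak X$ be an algebra on $\mathcal{Q}$ such that the category $\mathrm{Vect}^{\mathcal{Q}}_{\mathfrak X}$ of finitely $\mathfrak X$-encoded persistence modules is a full abelian subcategory of $\mathrm{Vect}^{\mathcal{Q}}$. Let $\mathfrak X_{\mathrm{Up}}$ be the algebra on $\mathcal{Q}$ generated by the upsets of $\mathcal{Q}$ that belong to $\mathfrak X$. Then the map \[ \nu \longmapsto \Big( M \mapsto \int_{\mathcal{Q}} \dim(M)\, d\nu \Big) \] from the set of contents on $\mathfrak X_{\mathrm{Up}}$ to the class of additive amplitudes on $\mathrm{Vect}^{\mathcal{Q}}_{\mathfrak X}$ is a bijection. In other words, every additive amplitude on $\mathrm{Vect}^{\mathcal{Q}}_{\mathfrak X}$ is given by integrating the Hilbert function $q\mapsto \dim M(q)$ against a unique content on $\mathfrak X_{\mathrm{Up}}$.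
   Context: $\mathrm{Vect}$ is the category of finite-dimensional vector spaces over a fixed field $\mathbb F$; a persistence module over a poset $\mathcal{Q}$ is a functor $\mathcal{Q}\to\mathrm{Vect}$ ($\mathcal{Q}$ viewed as a category). An algebra on a set is a family of subsets containing $\emptyset$ and closed under complements and finite unions. An upset of $\mathcal{Q}$ is a subset $U$ with $u\in U, u\le q\Rightarrow q\in U$; a downset is defined dually; an interval is an intersection of an upset and a downset. A finite encoding of $M\in\mathrm{Vect}^{\mathcal{Q}}$ consists of an order-preserving map $e\colon\mathcal{Q}\to\mathcal{P}$ to a finite poset $\mathcal{P}$, a module $M'\in\mathrm{Vect}^{\mathcal{P}}$ and an isomorphism $M\cong e^*M'=M'\circ e$; it is an $\mathfrak X$-encoding if every fiber $e^{-1}(p)$ belongs to $\mathfrak X$. $M$ is finitely $\mathfrak X$-encoded if it admits an $\mathfrak X$-encoding; $\mathrm{Vect}^{\mathcal{Q}}_{\mathfrak X}$ is the full subcategory of such modules. For an abelian category $\mathcal{A}$, an amplitude is a function $\alpha\colon\operatorname{ob}\mathcal{A}\to[0,\infty]$ with $\alpha(0)=0$ such that for every short exact sequence $0\to A\to B\to C\to 0$ one has $\alpha(A)\le\alpha(B)$, $\alpha(C)\le\alpha(B)$ and $\alpha(B)\le\alpha(A)+\alpha(C)$; it is additive if always $\alpha(B)=\alpha(A)+\alpha(C)$. A content on an algebra $\mathfrak A$ is a function $\nu\colon\mathfrak A\to[0,\infty]$ with $\nu(\emptyset)=0$ and $\nu(X\cup Y)=\nu(X)+\nu(Y)$ for disjoint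 $X,Y\in\mathfrak A$. For $M$ in $\mathrm{Vect}^{\mathcal{Q}}_{\mathfrak X}$ the Hilbert function $\dim(M)\colon q\mapsto\dim M(q)$ takes finitely many values with level sets in $\mathfrak X_{\mathrm{Up}}$, and the integral of such a finitely-valued function $f=\sum_i\lambda_i 1_{X_i}$ is defined as $\int f\,d\nu=\sum_i\lambda_i\nu(X_i)$. *)

theory Defs
  imports "HOL-Analysis.Sigma_Algebra" "Jordan_Normal_Form.Matrix_Kernel"
begin

text \<open>Finite-dimensional vector spaces over the field 'f are modelled by the
  skeleton of Vect: objects are the spaces 'f^n (n :: nat), morphisms are matrices.
  A persistence module over the poset 'q (a type with a partial order) is a pair
  (d, m): d q = dim M(q), and m q r is the matrix of M(q \<le> r) : M(q) \<rightarrow> M(r).\<close>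

type_synonym ('q, 'f) pmod = "('q \<Rightarrow> nat) \<times> ('q \<Rightarrow> 'q \<Rightarrow> 'f mat)"

definition is_functor :: "'p set \<Rightarrow> ('p \<Rightarrow> 'p \<Rightarrow> bool) \<Rightarrow> ('p \<Rightarrow> nat)
    \<Rightarrow> ('p \<Rightarrow> 'p \<Rightarrow> 'f::field mat) \<Rightarrow> bool" where
  "is_functor D lp d m \<longleftrightarrow>
     (\<forall>p\<in>D. \<forall>q\<in>D. lp p q \<longrightarrow> m p q \<in> carrier_mat (d q) (d p)) \<and>
     (\<forall>p\<in>D. m p p = one_mat (d p)) \<and>
     (\<forall>p\<in>D. \<forall>q\<in>D. \<forall>r\<in>D. lp p q \<and> lp q r \<longrightarrow> m p r = m q r * m p q)"

text \<open>Persistence modules over 'q (irrelevant entries for incomparable pairs are normalised to 0).\<close>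
definition pmod :: "('q::order, 'f::field) pmod \<Rightarrow> bool" where
  "pmod M \<longleftrightarrow> is_functor UNIV (\<le>) (fst M) (snd M) \<and>
     (\<forall>q r. \<not> q \<le> r \<longrightarrow> snd M q r = zero_mat (fst M r) (fst M q))"

definition is_hom :: "('q::order, 'f::field) pmod \<Rightarrow> ('q, 'f) pmod \<Rightarrow> ('q \<Rightarrow> 'f mat) \<Rightarrow> bool" where
  "is_hom M N f \<longleftrightarrow> pmod M \<and> pmod N \<and>
     (\<forall>q. f q \<in> carrier_mat (fst N q) (fst M q)) \<and>
     (\<forall>q r. q \<le> r \<longrightarrow> snd N q r * f q = f r * snd M q r)"

definition mat_image :: "'f::field mat \<Rightarrow> 'f vec set" where
  "mat_image A = (\<lambda>v. A *\<^sub>v v) ` carrier_vec (dim_col A)"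

definition is_iso :: "('q::order, 'f::field) pmod \<Rightarrow> ('q, 'f) pmod \<Rightarrow> bool" where
  "is_iso M N \<longleftrightarrow> (\<exists>f g. is_hom M N f \<and> is_hom N M g \<and>
     (\<forall>q. g q * f q = one_mat (fst M q) \<and> f q * g q = one_mat (fst N q)))"

definition short_exact :: "('q::order, 'f::field) pmod \<Rightarrow> ('q, 'f) pmod \<Rightarrow> ('q, 'f) pmod
    \<Rightarrow> ('q \<Rightarrow> 'f mat) \<Rightarrow> ('q \<Rightarrow> 'f mat) \<Rightarrow> bool" where
  "short_exact A B C f g \<longleftrightarrow> is_hom A B f \<and> is_hom B C g \<and>
     (\<forall>q. mat_kernel (f q) = {zero_vec (fst A q)} \<and>
          mat_image (f q) = mat_kernel (g q) \<and>
          mat_image (g q) = carrier_vec (fst C q))"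

definition zero_pmod :: "('q::order, 'f::field) pmod" where
  "zero_pmod = ((\<lambda>_. 0), (\<lambda>_ _. zero_mat 0 0))"

definition pullback :: "('q::order \<Rightarrow> nat) \<Rightarrow> (nat \<Rightarrow> nat) \<Rightarrow> (nat \<Rightarrow> nat \<Rightarrow> 'f::field mat)
    \<Rightarrow> ('q, 'f) pmod" where
  "pullback e d' m' = ((\<lambda>q. d' (e q)),
     (\<lambda>q r. if q \<le> r then m' (e q) (e r) else zero_mat (d' (e r)) (d' (e q))))"

text \<open>Finite \<X>-encodings. Every finite poset is isomorphic to a partial order lp on {..<n}.\<close>
definition fin_encoded :: "'q::order set set \<Rightarrow> ('q, 'f::field) pmod \<Rightarrow> bool" where
  "fin_encoded X M \<longleftrightarrow> pmod M \<and>
     (\<exists>(n::nat) lp e d' m'.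
        (\<forall>i<n. lp i i) \<and> (\<forall>i<n. \<forall>j<n. lp i j \<and> lp j i \<longrightarrow> i = j) \<and>
        (\<forall>i<n. \<forall>j<n. \<forall>k<n. lp i j \<and> lp j k \<longrightarrow> lp i k) \<and>
        (\<forall>q. e q < n) \<and> (\<forall>q r. q \<le> r \<longrightarrow> lp (e q) (e r)) \<and>
        is_functor {..<n} lp d' m' \<and>
        (\<forall>i<n. e -` {i} \<in> X) \<and>
        is_iso M (pullback e d' m'))"

definition VectX :: "'q::order set set \<Rightarrow> ('q, 'f::field) pmod set" where
  "VectX X = {M. fin_encoded X M}"

text \<open>Full abelian subcategory of Vect^Q: contains 0 and is closed under
  binary biproducts, kernels and cokernels (computed in Vect^Q).\<close>
definition abelian_subcat :: "('q::order, 'f::field) pmod set \<Rightarrow> bool" where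
  "abelian_subcat \<C> \<longleftrightarrow> \<C> \<subseteq> {M. pmod M} \<and> zero_pmod \<in> \<C> \<and>
     (\<forall>M\<in>\<C>. \<forall>N\<in>\<C>. \<exists>S\<in>\<C>. \<exists>i1 i2 p1 p2. is_hom M S i1 \<and> is_hom N S i2 \<and>
         is_hom S M p1 \<and> is_hom S N p2 \<and>
         (\<forall>q. p1 q * i1 q = one_mat (fst M q) \<and> p2 q * i2 q = one_mat (fst N q) \<and>
              i1 q * p1 q + i2 q * p2 q = one_mat (fst S q))) \<and>
     (\<forall>M\<in>\<C>. \<forall>N\<in>\<C>. \<forall>f. is_hom M N f \<longrightarrow>
         (\<exists>K\<in>\<C>. \<exists>k. is_hom K M k \<and>
            (\<forall>q. mat_kernel (k q) = {zero_vec (fst K q)} \<and> mat_image (k q) = mat_kernel (f q))) \<and>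
         (\<exists>C\<in>\<C>. \<exists>c. is_hom N C c \<and>
            (\<forall>q. mat_image (c q) = carrier_vec (fst C q) \<and> mat_kernel (c q) = mat_image (f q))))"

definition amplitude :: "('q::order, 'f::field) pmod set \<Rightarrow> (('q, 'f) pmod \<Rightarrow> ennreal) \<Rightarrow> bool" where
  "amplitude \<C> \<alpha> \<longleftrightarrow> (\<forall>Z\<in>\<C>. fst Z = (\<lambda>_. 0) \<longrightarrow> \<alpha> Z = 0) \<and>
     (\<forall>A\<in>\<C>. \<forall>B\<in>\<C>. \<forall>C\<in>\<C>. \<forall>f g. short_exact A B C f g \<longrightarrow>
        \<alpha> A \<le> \<alpha> B \<and> \<alpha> C \<le> \<alpha> B \<and> \<alpha> B \<le> \<alpha> A + \<alpha> C)"

definition additive_amplitude :: "('q::order, 'f::field) pmod set \<Rightarrow> (('q, 'f) pmod \<Rightarrow> ennreal) \<Rightarrow> bool" where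
  "additive_amplitude \<C> \<alpha> \<longleftrightarrow> amplitude \<C> \<alpha> \<and>
     (\<forall>A\<in>\<C>. \<forall>B\<in>\<C>. \<forall>C\<in>\<C>. \<forall>f g. short_exact A B C f g \<longrightarrow> \<alpha> B = \<alpha> A + \<alpha> C)"

definition upset :: "'q::order set \<Rightarrow> bool" where
  "upset U \<longleftrightarrow> (\<forall>u q. u \<in> U \<and> u \<le> q \<longrightarrow> q \<in> U)"

definition XUp :: "'q::order set set \<Rightarrow> 'q set set" where
  "XUp X = \<Inter> {A. Sigma_Algebra.algebra UNIV A \<and> {U \<in> X. upset U} \<subseteq> A}"

definition content :: "'q set set \<Rightarrow> ('q set \<Rightarrow> ennreal) \<Rightarrow> bool" where
  "content A \<nu> \<longleftrightarrow> \<nu> {} = 0 \<and>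
     (\<forall>X\<in>A. \<forall>Y\<in>A. X \<inter> Y = {} \<longrightarrow> \<nu> (X \<union> Y) = \<nu> X + \<nu> Y)"

text \<open>Integral of the Hilbert function dim(M) against a content, via its level sets.\<close>
definition hilbert_integral :: "('q set \<Rightarrow> ennreal) \<Rightarrow> ('q, 'f) pmod \<Rightarrow> ennreal" where
  "hilbert_integral \<nu> M = (\<Sum>k \<in> range (fst M). of_nat k * \<nu> {q. fst M q = k})"

end

theory Submission
  imports Defs
begin

lemma mat_linear_map:
  fixes A :: "'a::field mat"
  assumes A: "A \<in> carrier_mat m n"
  shows "linear_map class_ring (module_vec TYPE('a) n) (module_vec TYPE('a) m) (\<lambda>v. A *\<^sub>v v)"
proof -
  show ?thesis
    apply (rule linear_map.intro)
      apply (rule vec_vs)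
     apply (rule vec_vs)
    apply (rule mod_hom.intro)
      apply (rule vec_module)
     apply (rule vec_module)
    apply (rule mod_hom_axioms.intro)
    using A by (auto simp: module_hom_def module_vec_simps class_ring_simps mult_add_distrib_mat_vec mult_mat_vec)
qed

lemma rank_nullity_mat:
  fixes A :: "'a::field mat"
  assumes A: "A \<in> carrier_mat m n"
  shows "vectorspace.dim class_ring ((module_vec TYPE('a) m)\<lparr>carrier := mat_image A\<rparr>)
       + vectorspace.dim class_ring ((module_vec TYPE('a) n)\<lparr>carrier := mat_kernel A\<rparr>) = n"
proof -
  interpret L: linear_map class_ring "module_vec TYPE('a) n" "module_vec TYPE('a) m" "\<lambda>v. A *\<^sub>v v"
    by (rule mat_linear_map[OF A])
  interpret Vn: vec_space "TYPE('a)" n .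
  have "L.imT = mat_image A" using A unfolding L.im_def mat_image_def by (simp add: module_vec_simps)
  moreover have "L.kerT = mat_kernel A" using A unfolding L.ker_def mat_kernel_def by (auto simp: module_vec_simps)
  moreover have "L.V.fin_dim" using Vn.fin_dim by simp
  moreover have "L.V.dim = n" using Vn.dim_is_n by simp
  ultimately show ?thesis using L.rank_nullity by simp
qed


lemma dim_zero_sub:
  "vectorspace.dim class_ring ((module_vec TYPE('a::field) n)\<lparr>carrier := {0\<^sub>v n}\<rparr>) = 0"
proof -
  interpret L: linear_map class_ring "module_vec TYPE('a) n" "module_vec TYPE('a) n" "\<lambda>v. (1\<^sub>m n) *\<^sub>v v"
    by (rule mat_linear_map) simp
  have "L.kerT = {0\<^sub>v n}" unfolding L.ker_def by (auto simp: module_vec_simps)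
  moreover have "inj_on (\<lambda>v. (1\<^sub>m n) *\<^sub>v v) (carrier (module_vec TYPE('a) n))"
    by (auto simp: module_vec_simps inj_on_def)
  ultimately show ?thesis using L.inj_imp_dim_ker0 by simp
qed

lemma dim_full_sub:
  "vectorspace.dim class_ring ((module_vec TYPE('a::field) n)\<lparr>carrier := carrier_vec n\<rparr>) = n"
proof -
  interpret Vn: vec_space "TYPE('a)" n .
  have "(module_vec TYPE('a::field) n)\<lparr>carrier := carrier_vec n\<rparr> = module_vec TYPE('a::field) n"
    by (simp add: module_vec_simps)
  then show ?thesis using Vn.dim_is_n by metis
qed

lemma exact_dims:
  fixes A :: "'a::field mat"
  assumes A: "A \<in> carrier_mat b a" and B: "B \<in> carrier_mat c b"
    and k: "mat_kernel A = {0\<^sub>v a}" and ik: "mat_image A = mat_kernel B"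
    and s: "mat_image B = carrier_vec c"
  shows "b = a + c"
  using rank_nullity_mat[OF A] rank_nullity_mat[OF B] k ik s dim_zero_sub[where 'a='a and n=a]
    dim_full_sub[where 'a='a and n=c] by simp

lemma XUp_algebra: "Sigma_Algebra.algebra UNIV (XUp X)"
proof -
  define F where "F = {A. Sigma_Algebra.algebra UNIV A \<and> {U \<in> X. upset U} \<subseteq> A}"
  have XF: "XUp X = \<Inter>F" unfolding XUp_def F_def ..
  have e: "{} \<in> \<Inter>F" unfolding F_def by (auto simp: algebra_iff_Un)
  have c: "UNIV - a \<in> \<Inter>F" if "a \<in> \<Inter>F" for a
    using that unfolding F_def by (auto simp: algebra_iff_Un)
  have u: "a \<union> b \<in> \<Inter>F" if "a \<in> \<Inter>F" "b \<in> \<Inter>F" for a b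
    using that unfolding F_def by (auto simp: algebra_iff_Un)
  show ?thesis unfolding XF algebra_iff_Un using e c u by blast
qed

lemma XUp_gen: "U \<in> X \<Longrightarrow> upset U \<Longrightarrow> U \<in> XUp X"
  unfolding XUp_def by auto

lemma XUp_min: "Sigma_Algebra.algebra UNIV A \<Longrightarrow> {U\<in>X. upset U} \<subseteq> A \<Longrightarrow> XUp X \<subseteq> A"
  unfolding XUp_def by auto

definition enc :: "'q::order set set \<Rightarrow> nat \<Rightarrow> (nat\<Rightarrow>nat\<Rightarrow>bool) \<Rightarrow> ('q \<Rightarrow> nat) \<Rightarrow> bool" where
 "enc X n lp e \<longleftrightarrow> (\<forall>i<n. lp i i) \<and> (\<forall>i<n. \<forall>j<n. lp i j \<and> lp j i \<longrightarrow> i = j) \<and>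
    (\<forall>i<n. \<forall>j<n. \<forall>k<n. lp i j \<and> lp j k \<longrightarrow> lp i k) \<and> (\<forall>q. e q < n) \<and>
    (\<forall>q r. q \<le> r \<longrightarrow> lp (e q) (e r)) \<and> (\<forall>i<n. e -` {i} \<in> X)"

lemma encD:
  assumes "enc X n lp e"
  shows "\<And>i. i < n \<Longrightarrow> lp i i" "\<And>i j. i < n \<Longrightarrow> j < n \<Longrightarrow> lp i j \<Longrightarrow> lp j i \<Longrightarrow> i = j"
    "\<And>i j k. i < n \<Longrightarrow> j < n \<Longrightarrow> k < n \<Longrightarrow> lp i j \<Longrightarrow> lp j k \<Longrightarrow> lp i k"
    "\<And>q. e q < n" "\<And>q r. q \<le> r \<Longrightarrow> lp (e q) (e r)" "\<And>i. i < n \<Longrightarrow> e -` {i} \<in> X"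
proof -
  have c: "(\<forall>i<n. lp i i) \<and> (\<forall>i<n. \<forall>j<n. lp i j \<and> lp j i \<longrightarrow> i = j) \<and>
    (\<forall>i<n. \<forall>j<n. \<forall>k<n. lp i j \<and> lp j k \<longrightarrow> lp i k) \<and> (\<forall>q. e q < n) \<and>
    (\<forall>q r. q \<le> r \<longrightarrow> lp (e q) (e r)) \<and> (\<forall>i<n. e -` {i} \<in> X)"
    using assms unfolding enc_def .
  note c1 = c[THEN conjunct1] and c2 = c[THEN conjunct2, THEN conjunct1]
    and c3 = c[THEN conjunct2, THEN conjunct2, THEN conjunct1]
    and c4 = c[THEN conjunct2, THEN conjunct2, THEN conjunct2, THEN conjunct1]
    and c5 = c[THEN conjunct2, THEN conjunct2, THEN conjunct2, THEN conjunct2, THEN conjunct1]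
    and c6 = c[THEN conjunct2, THEN conjunct2, THEN conjunct2, THEN conjunct2, THEN conjunct2]
  show "\<And>i. i < n \<Longrightarrow> lp i i" using c1 by metis
  show "\<And>i j. i < n \<Longrightarrow> j < n \<Longrightarrow> lp i j \<Longrightarrow> lp j i \<Longrightarrow> i = j" using c2 by metis
  show "\<And>i j k. i < n \<Longrightarrow> j < n \<Longrightarrow> k < n \<Longrightarrow> lp i j \<Longrightarrow> lp j k \<Longrightarrow> lp i k"
    using c3 by metis
  show "\<And>q. e q < n" using c4 by metis
  show "\<And>q r. q \<le> r \<Longrightarrow> lp (e q) (e r)" using c5 by metis
  show "\<And>i. i < n \<Longrightarrow> e -` {i} \<in> X" using c6 by metis
qed

lemma encI:
  assumes "\<And>i. i < n \<Longrightarrow> lp i i" "\<And>i j. i < n \<Longrightarrow> j < n \<Longrightarrow> lp i j \<Longrightarrow> lp j i \<Longrightarrow> i = j"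
    "\<And>i j k. i < n \<Longrightarrow> j < n \<Longrightarrow> k < n \<Longrightarrow> lp i j \<Longrightarrow> lp j k \<Longrightarrow> lp i k"
    "\<And>q. e q < n" "\<And>q r. q \<le> r \<Longrightarrow> lp (e q) (e r)" "\<And>i. i < n \<Longrightarrow> e -` {i} \<in> X"
  shows "enc X n lp e"
  unfolding enc_def
  apply (intro conjI allI impI)
       apply (metis assms(1))
      apply (metis assms(2))
     apply (metis assms(3))
    apply (metis assms(4))
   apply (metis assms(5))
  apply (metis assms(6))
  done

lemma fin_encodedI:
  assumes "pmod M" "enc X n lp e" "is_functor {..<n} lp d m" "is_iso M (pullback e d m)"
  shows "fin_encoded X M"
  unfolding fin_encoded_def
  apply (rule conjI, rule assms(1))
  apply (rule exI[of _ n], rule exI[of _ lp], rule exI[of _ e], rule exI[of _ d], rule exI[of _ m])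
  apply (intro conjI allI impI)
         apply (metis encD(1)[OF assms(2)])
        apply (metis encD(2)[OF assms(2)])
       apply (metis encD(3)[OF assms(2)])
      apply (metis encD(4)[OF assms(2)])
     apply (metis encD(5)[OF assms(2)])
    apply (rule assms(3))
   apply (metis encD(6)[OF assms(2)])
  apply (rule assms(4))
  done

lemma fin_encodedE:
  assumes "fin_encoded X M"
  obtains n lp e d m where "enc X n lp e" "is_functor {..<n} lp d m" "is_iso M (pullback e d m)"
  using assms unfolding fin_encoded_def
  apply (elim conjE exE)
  subgoal for n lp e d m
    apply (rule that[of n lp e d m])
    apply (rule encI) apply metis+ done
  done

lemma enc_preimage_X:
  assumes X: "Sigma_Algebra.algebra UNIV X" and E: "enc X n lp e"
  shows "e -` S \<in> X"
proof -
  interpret Sigma_Algebra.algebra UNIV X by fact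
  have en: "\<And>q. e q < n" by (rule encD(4)[OF E])
  have "e -` S = (\<Union>i\<in>{i. i < n \<and> i \<in> S}. e -` {i})" using en by blast
  also have "\<dots> \<in> X" using encD(6)[OF E] by (intro finite_UN) auto
  finally show ?thesis .
qed

lemma fiber_XUp:
  assumes X: "Sigma_Algebra.algebra UNIV X" and E: "enc X n lp e"
  shows "e -` {i} \<in> XUp X"
proof (cases "i < n")
  case False
  then have "e -` {i} = {}" using encD(4)[OF E] by (metis empty_iff le_less_trans not_le vimage_singleton_eq subsetI subset_empty)
  then show ?thesis using semiring_of_sets.empty_sets[OF ring_of_sets.axioms(1)[OF Sigma_Algebra.algebra.axioms(1)[OF XUp_algebra]]] by simp
next
  case True
  note en = encD(4)[OF E] and tr = encD(3)[OF E] and an = encD(2)[OF E] and mo = encD(5)[OF E]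
  have rf: "lp i i" using encD(1)[OF E True] .
  define U where "U = e -` {j. lp i j}"
  define V where "V = e -` {j. lp i j \<and> j \<noteq> i}"
  have "upset U" unfolding upset_def U_def using tr[OF True en en] mo by blast
  moreover have "U \<in> X" unfolding U_def by (rule enc_preimage_X[OF X E])
  ultimately have U: "U \<in> XUp X" by (simp add: XUp_gen)
  have "upset V" unfolding upset_def V_def
  proof (intro allI impI)
    fix u q assume a: "u \<in> e -` {j. lp i j \<and> j \<noteq> i} \<and> u \<le> q"
    then have 1: "lp i (e u)" "e u \<noteq> i" "lp (e u) (e q)" using mo by auto
    then have "lp i (e q)" using tr[OF True en en] by blast
    moreover have "e q \<noteq> i" using 1 an[OF True en] by metis
    ultimately show "q \<in> e -` {j. lp i j \<and> j \<noteq> i}" by simp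
  qed
  moreover have "V \<in> X" unfolding V_def by (rule enc_preimage_X[OF X E])
  ultimately have V: "V \<in> XUp X" by (simp add: XUp_gen)
  have "e -` {i} = U - V" unfolding U_def V_def using rf by auto
  then show ?thesis using ring_of_sets.Diff[OF Sigma_Algebra.algebra.axioms(1)[OF XUp_algebra] U V] by simp
qed

lemma content_UN:
  assumes A: "Sigma_Algebra.algebra UNIV A" and c: "content A \<nu>" and S: "finite S"
    and B: "\<forall>i\<in>S. B i \<in> A" and d: "disjoint_family_on B S"
  shows "\<nu> (\<Union>i\<in>S. B i) = (\<Sum>i\<in>S. \<nu> (B i))"
  using S B d
proof (induction S rule: finite_induct)
  case empty
  then show ?case using c unfolding content_def by simp
next
  case (insert x F)
  interpret Sigma_Algebra.algebra UNIV A by fact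
  have 1: "(\<Union>i\<in>F. B i) \<in> A" using insert by (intro finite_UN) auto
  have 2: "B x \<inter> (\<Union>i\<in>F. B i) = {}" using insert.prems(2) insert.hyps(2)
    unfolding disjoint_family_on_def by auto
  have 3: "disjoint_family_on B F" using insert.prems(2) unfolding disjoint_family_on_def by auto
  have "\<nu> (\<Union>i\<in>insert x F. B i) = \<nu> (B x \<union> (\<Union>i\<in>F. B i))" by simp
  also have "\<dots> = \<nu> (B x) + \<nu> (\<Union>i\<in>F. B i)" using c 1 2 insert.prems(1) unfolding content_def by auto
  also have "\<dots> = \<nu> (B x) + (\<Sum>i\<in>F. \<nu> (B i))" using insert 3 by simp
  finally show ?case using insert.hyps by simp
qed

lemma hilbert_partition:
  fixes M :: "('q, 'f) pmod"
  assumes A: "Sigma_Algebra.algebra UNIV A" and c: "content A \<nu>" and J: "finite J"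
    and B: "\<forall>j\<in>J. B j \<in> A" and d: "disjoint_family_on B J" and cov: "(\<Union>j\<in>J. B j) = UNIV"
    and cst: "\<forall>j\<in>J. \<forall>q\<in>B j. fst M q = cc j"
  shows "hilbert_integral \<nu> M = (\<Sum>j\<in>J. of_nat (cc j) * \<nu> (B j))"
proof -
  define J' where "J' = {j\<in>J. B j \<noteq> {}}"
  have fJ': "finite J'" using J unfolding J'_def by auto
  have rng: "range (fst M) = cc ` J'"
  proof
    show "range (fst M) \<subseteq> cc ` J'"
    proof
      fix k assume "k \<in> range (fst M)"
      then obtain q where q: "k = fst M q" by auto
      from cov obtain j where "j \<in> J" "q \<in> B j" by blast
      then show "k \<in> cc ` J'" using q cst unfolding J'_def by force
    qed
    show "cc ` J' \<subseteq> range (fst M)"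
    proof
      fix k assume "k \<in> cc ` J'"
      then obtain j q where "j \<in> J" "q \<in> B j" "k = cc j" unfolding J'_def by blast
      then show "k \<in> range (fst M)" using cst by (metis rangeI)
    qed
  qed
  have lev: "{q. fst M q = k} = (\<Union>j\<in>{j\<in>J'. cc j = k}. B j)" for k
  proof
    show "{q. fst M q = k} \<subseteq> (\<Union>j\<in>{j\<in>J'. cc j = k}. B j)"
    proof
      fix q assume "q \<in> {q. fst M q = k}"
      moreover from cov obtain j where "j \<in> J" "q \<in> B j" by blast
      ultimately show "q \<in> (\<Union>j\<in>{j\<in>J'. cc j = k}. B j)" using cst unfolding J'_def by force
    qed
    show "(\<Union>j\<in>{j\<in>J'. cc j = k}. B j) \<subseteq> {q. fst M q = k}" using cst unfolding J'_def by force
  qed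
  have nu: "\<nu> {q. fst M q = k} = (\<Sum>j\<in>{j\<in>J'. cc j = k}. \<nu> (B j))" for k
    unfolding lev
    by (rule content_UN[OF A c]) (use J B d in \<open>auto simp: J'_def disjoint_family_on_def\<close>)
  have "hilbert_integral \<nu> M = (\<Sum>k\<in>cc ` J'. of_nat k * (\<Sum>j\<in>{j\<in>J'. cc j = k}. \<nu> (B j)))"
    unfolding hilbert_integral_def rng nu ..
  also have "\<dots> = (\<Sum>k\<in>cc ` J'. (\<Sum>j\<in>{j\<in>J'. cc j = k}. of_nat (cc j) * \<nu> (B j)))"
    by (simp add: sum_distrib_left)
  also have "\<dots> = (\<Sum>j\<in>J'. of_nat (cc j) * \<nu> (B j))"
    by (rule sum.image_gen[symmetric]) (rule fJ')
  also have "\<dots> = (\<Sum>j\<in>J. of_nat (cc j) * \<nu> (B j))"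
    by (rule sum.mono_neutral_left) (use J c in \<open>auto simp: J'_def content_def\<close>)
  finally show ?thesis .
qed

lemma mat_eq_zero_dim:
  assumes "A \<in> carrier_mat r c" "B \<in> carrier_mat r c" "r = 0 \<or> c = 0"
  shows "A = B"
  using assms by (intro eq_matI) auto

lemma carrier_vec_0_el: "v \<in> carrier_vec 0 \<Longrightarrow> v = 0\<^sub>v 0"
proof -
  assume "v \<in> carrier_vec 0"
  then have d: "dim_vec v = 0" by (rule carrier_vecD)
  show "v = 0\<^sub>v 0" by (rule eq_vecI) (simp_all add: d)
qed

lemma carrier_vec_0: "carrier_vec 0 = {0\<^sub>v 0}"
  using carrier_vec_0_el by auto

lemma mat_vec_zero: "A \<in> carrier_mat nr nc \<Longrightarrow> A *\<^sub>v 0\<^sub>v nc = (0\<^sub>v nr :: 'a::field vec)"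
  by (intro eq_vecI) (auto simp: scalar_prod_def)

lemma kernel_zero_cols: "mat_kernel (0\<^sub>m b 0 :: 'a::field mat) = {0\<^sub>v 0}"
  unfolding mat_kernel_def using carrier_vec_0 by auto

lemma image_zero_cols: "mat_image (0\<^sub>m b 0 :: 'a::field mat) = {0\<^sub>v b}"
proof -
  have "mat_image (0\<^sub>m b 0 :: 'a::field mat) = (\<lambda>v. 0\<^sub>m b 0 *\<^sub>v v) ` carrier_vec 0"
    by (simp add: mat_image_def)
  also have "\<dots> = {0\<^sub>m b 0 *\<^sub>v 0\<^sub>v 0}" by (simp only: carrier_vec_0 image_insert image_empty)
  also have "\<dots> = {0\<^sub>v b}" by (subst mat_vec_zero[of _ b 0]) auto
  finally show ?thesis .
qed

lemma iso_mats:
  fixes F :: "'a::field mat"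
  assumes F: "F \<in> carrier_mat b a" and G: "G \<in> carrier_mat a b"
    and GF: "G * F = 1\<^sub>m a" and FG: "F * G = 1\<^sub>m b"
  shows "mat_kernel F = {0\<^sub>v a}" "mat_image F = carrier_vec b"
proof -
  show "mat_kernel F = {0\<^sub>v a}"
  proof
    show "mat_kernel F \<subseteq> {0\<^sub>v a}"
    proof
      fix v assume v: "v \<in> mat_kernel F"
      then have vc: "v \<in> carrier_vec a" and Fv: "F *\<^sub>v v = 0\<^sub>v b" using mat_kernelD[OF F] by auto
      have "v = (G * F) *\<^sub>v v" using GF vc by simp
      also have "\<dots> = G *\<^sub>v (F *\<^sub>v v)" using F G vc by simp
      also have "\<dots> = 0\<^sub>v a" using Fv G by (simp add: mat_vec_zero)
      finally show "v \<in> {0\<^sub>v a}" by simp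
    qed
    show "{0\<^sub>v a} \<subseteq> mat_kernel F" using F by (auto intro: mat_kernelI simp: mat_vec_zero)
  qed
  show "mat_image F = carrier_vec b"
  proof
    show "mat_image F \<subseteq> carrier_vec b" unfolding mat_image_def using F by auto
    show "carrier_vec b \<subseteq> mat_image F"
    proof
      fix w :: "'a vec" assume w: "w \<in> carrier_vec b"
      have "w = (F * G) *\<^sub>v w" using FG w by simp
      also have "\<dots> = F *\<^sub>v (G *\<^sub>v w)" using F G w by simp
      finally show "w \<in> mat_image F" unfolding mat_image_def using F G w by auto
    qed
  qed
qed

lemma pmod_zero: "pmod (zero_pmod :: ('q::order, 'f::field) pmod)"
proof -
  have e: "(0\<^sub>m 0 0 :: 'f mat) = 1\<^sub>m 0" by (rule mat_eq_zero_dim) auto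
  show ?thesis unfolding zero_pmod_def Defs.pmod_def is_functor_def by (simp add: e)
qed

lemma is_homD:
  assumes "is_hom M N f"
  shows "pmod M" "pmod N" "\<And>q. f q \<in> carrier_mat (fst N q) (fst M q)"
    "\<And>q r. q \<le> r \<Longrightarrow> snd N q r * f q = f r * snd M q r"
  using assms unfolding is_hom_def by auto

lemma pmodD:
  assumes "pmod M"
  shows "\<And>q r. q \<le> r \<Longrightarrow> snd M q r \<in> carrier_mat (fst M r) (fst M q)"
    "\<And>q. snd M q q = 1\<^sub>m (fst M q)"
    "\<And>q r s. q \<le> r \<Longrightarrow> r \<le> s \<Longrightarrow> snd M q s = snd M r s * snd M q r"
    "\<And>q r. \<not> q \<le> r \<Longrightarrow> snd M q r = 0\<^sub>m (fst M r) (fst M q)"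
  using assms unfolding Defs.pmod_def is_functor_def by auto

lemma short_exact_dims:
  fixes A :: "('q::order, 'f::field) pmod"
  assumes "short_exact A B C f g"
  shows "fst B q = fst A q + fst C q"
proof -
  have f: "is_hom A B f" and g: "is_hom B C g" using assms unfolding short_exact_def by auto
  have ex: "mat_kernel (f q) = {0\<^sub>v (fst A q)}" "mat_image (f q) = mat_kernel (g q)"
      "mat_image (g q) = carrier_vec (fst C q)"
    using assms unfolding short_exact_def by auto
  show ?thesis by (rule exact_dims[OF is_homD(3)[OF f] is_homD(3)[OF g] ex])
qed

lemma hom_from_zero:
  assumes "pmod (M :: ('q::order, 'f::field) pmod)"
  shows "is_hom zero_pmod M (\<lambda>q. 0\<^sub>m (fst M q) 0)"
  unfolding is_hom_def
proof (intro conjI allI impI)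
  fix q r :: 'q assume "q \<le> r"
  then have "snd M q r \<in> carrier_mat (fst M r) (fst M q)" using pmodD(1)[OF assms] by auto
  then show "snd M q r * 0\<^sub>m (fst M q) 0 = 0\<^sub>m (fst M r) 0 * snd zero_pmod q r"
    by (intro mat_eq_zero_dim[of _ "fst M r" 0]) (auto simp: zero_pmod_def)
qed (use pmod_zero assms in \<open>auto simp: zero_pmod_def\<close>)

lemma iso_short_exact:
  fixes M :: "('q::order, 'f::field) pmod"
  assumes "is_iso M N"
  obtains F where "short_exact zero_pmod M N (\<lambda>q. 0\<^sub>m (fst M q) 0) F"
proof -
  obtain F G where F: "is_hom M N F" and G: "is_hom N M G"
    and inv: "\<And>q. G q * F q = 1\<^sub>m (fst M q) \<and> F q * G q = 1\<^sub>m (fst N q)"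
    using assms unfolding is_iso_def by blast
  have im: "mat_kernel (F q) = {0\<^sub>v (fst M q)}" "mat_image (F q) = carrier_vec (fst N q)" for q
    using iso_mats[OF is_homD(3)[OF F] is_homD(3)[OF G]] inv by auto
  have "short_exact zero_pmod M N (\<lambda>q. 0\<^sub>m (fst M q) 0) F"
    unfolding short_exact_def
    using hom_from_zero[OF is_homD(1)[OF F]] F im
    by (auto simp: kernel_zero_cols image_zero_cols zero_pmod_def)
  then show ?thesis by (rule that)
qed

lemma iso_dims:
  fixes M :: "('q::order, 'f::field) pmod"
  assumes "is_iso M N"
  shows "fst M q = fst N q"
proof -
  obtain F where "short_exact zero_pmod M N (\<lambda>q. 0\<^sub>m (fst M q) 0) F" using iso_short_exact[OF assms] .
  from short_exact_dims[OF this] show ?thesis by (simp add: zero_pmod_def)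
qed

lemma amp_zero:
  assumes "amplitude Cat \<alpha>" "Z \<in> Cat" "\<And>q. fst Z q = 0"
  shows "\<alpha> Z = 0"
proof -
  have "fst Z = (\<lambda>_. 0)" using assms(3) by auto
  then show ?thesis using assms(1,2) unfolding amplitude_def by blast
qed

lemma add_amp:
  assumes "additive_amplitude Cat \<alpha>" "A \<in> Cat" "B \<in> Cat" "C \<in> Cat" "short_exact A B C f g"
  shows "\<alpha> B = \<alpha> A + \<alpha> C"
  using assms unfolding additive_amplitude_def by blast

lemma alpha_iso:
  fixes M :: "('q::order, 'f::field) pmod"
  assumes aa: "additive_amplitude Cat \<alpha>" and z: "zero_pmod \<in> Cat" and M: "M \<in> Cat" and N: "N \<in> Cat"
    and iso: "is_iso M N"
  shows "\<alpha> M = \<alpha> N"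
proof -
  obtain F where se: "short_exact zero_pmod M N (\<lambda>q. 0\<^sub>m (fst M q) 0) F" using iso_short_exact[OF iso] .
  have "\<alpha> M = \<alpha> zero_pmod + \<alpha> N" by (rule add_amp[OF aa z M N se])
  moreover have "\<alpha> zero_pmod = 0"
    using aa z unfolding additive_amplitude_def by (intro amp_zero[of Cat]) (auto simp: zero_pmod_def)
  ultimately show ?thesis by simp
qed

definition Pm :: "nat \<Rightarrow> 'a::field mat" where
  "Pm k = mat (k - 1) k (\<lambda>(a, b). if a = b then 1 else 0)"
definition Rm :: "nat \<Rightarrow> 'a::field mat" where
  "Rm k = mat k (k - 1) (\<lambda>(a, b). if a = b then 1 else 0)"
definition Um :: "nat \<Rightarrow> 'a::field mat" where
  "Um k = mat k 1 (\<lambda>(a, b). if a = k - 1 then 1 else 0)"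

lemma Pm_dims[simp]: "dim_row (Pm k) = k - 1" "dim_col (Pm k) = k" unfolding Pm_def by simp_all
lemma Rm_dims[simp]: "dim_row (Rm k) = k" "dim_col (Rm k) = k - 1" unfolding Rm_def by simp_all
lemma Um_dims[simp]: "dim_row (Um k) = k" "dim_col (Um k) = 1" unfolding Um_def by simp_all
lemma Pm_carrier[simp]: "Pm k \<in> carrier_mat (k - 1) k" unfolding Pm_def by simp
lemma Rm_carrier[simp]: "Rm k \<in> carrier_mat k (k - 1)" unfolding Rm_def by simp
lemma Um_carrier[simp]: "Um k \<in> carrier_mat k 1" unfolding Um_def by simp

lemma sum_delta_lt: "(\<Sum>c<(k::nat). if c = a then t else 0) = (if a < k then t else (0::'a::comm_monoid_add))"
  by (induct k) auto

lemma sum_delta_mult: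
  assumes "a < (k::nat)"
  shows "(\<Sum>c<k. (if a = c then 1 else 0) * (if c = b then 1 else (0::'a::field))) = (if a = b then 1 else 0)"
proof -
  have "(\<Sum>c<k. (if a = c then 1 else 0) * (if c = b then 1 else (0::'a))) =
        (\<Sum>c<k. if c = a then (if a = b then 1 else 0) else 0)"
    by (intro sum.cong) auto
  also have "\<dots> = (if a = b then 1 else 0)"
    using assms by (simp only: sum_delta_lt) simp
  finally show ?thesis .
qed

lemma Pm_Rm: "Pm k * Rm k = (1\<^sub>m (k - 1) :: 'a::field mat)"
proof (rule eq_matI)
  fix a b assume ab: "a < dim_row (1\<^sub>m (k - 1) :: 'a mat)" "b < dim_col (1\<^sub>m (k - 1) :: 'a mat)"
  then have "a < k" "b < k" by auto
  have "(Pm k * Rm k :: 'a mat) $$ (a, b) = (\<Sum>c<k. (if a = c then 1 else 0) * (if c = b then 1 else 0))"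
    using ab unfolding Pm_def Rm_def
    by (simp add: scalar_prod_def row_def col_def lessThan_atLeast0)
  also have "\<dots> = (1\<^sub>m (k - 1) :: 'a mat) $$ (a, b)" using ab \<open>a < k\<close> by (simp add: sum_delta_mult)
  finally show "(Pm k * Rm k :: 'a mat) $$ (a, b) = (1\<^sub>m (k - 1) :: 'a mat) $$ (a, b)" .
qed auto

lemma Pm_vec: "v \<in> carrier_vec k \<Longrightarrow> (Pm k :: 'a::field mat) *\<^sub>v v = vec (k - 1) (\<lambda>a. v $ a)"
proof (rule eq_vecI)
  fix a assume v: "v \<in> carrier_vec k" and a: "a < dim_vec (vec (k - 1) (\<lambda>a. v $ a))"
  then have "a < k - 1" by simp
  have "(Pm k *\<^sub>v v) $ a = (\<Sum>c<k. (if a = c then 1 else 0) * v $ c)"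
    using v a unfolding Pm_def by (simp add: scalar_prod_def row_def lessThan_atLeast0)
  also have "\<dots> = (\<Sum>c<k. if c = a then v $ a else 0)" by (intro sum.cong) auto
  also have "\<dots> = v $ a" using \<open>a < k - 1\<close> by (simp only: sum_delta_lt) simp
  finally show "(Pm k *\<^sub>v v) $ a = vec (k - 1) (\<lambda>a. v $ a) $ a" using \<open>a < k - 1\<close> by (simp only: sum_delta_lt) simp
qed (simp add: Pm_def)

lemma Um_vec: "w \<in> carrier_vec 1 \<Longrightarrow> (Um k :: 'a::field mat) *\<^sub>v w = vec k (\<lambda>a. if a = k - 1 then w $ 0 else 0)"
proof (rule eq_vecI)
  fix a assume w: "w \<in> carrier_vec 1" and a: "a < dim_vec (vec k (\<lambda>a. if a = k - 1 then w $ 0 else 0))"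
  then show "(Um k *\<^sub>v w) $ a = vec k (\<lambda>a. if a = k - 1 then w $ 0 else 0) $ a"
    unfolding Um_def by (simp add: scalar_prod_def row_def)
qed (simp add: Um_def)

lemma Um_kernel: "k > 0 \<Longrightarrow> mat_kernel (Um k :: 'a::field mat) = {0\<^sub>v 1}"
proof
  assume k: "k > 0"
  show "mat_kernel (Um k :: 'a mat) \<subseteq> {0\<^sub>v 1}"
  proof
    fix w :: "'a vec" assume "w \<in> mat_kernel (Um k)"
    then have w: "w \<in> carrier_vec 1" and z: "Um k *\<^sub>v w = 0\<^sub>v k" using mat_kernelD[OF Um_carrier] by auto
    have "(Um k *\<^sub>v w) $ (k - 1) = w $ 0" using Um_vec[OF w] k by simp
    then have "w $ 0 = 0" using z k by simp
    then have "w = 0\<^sub>v 1" using w by (intro eq_vecI) auto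
    then show "w \<in> {0\<^sub>v 1}" by simp
  qed
  show "{0\<^sub>v 1} \<subseteq> mat_kernel (Um k :: 'a mat)"
    using mat_vec_zero[OF Um_carrier[of k]] by (auto intro!: mat_kernelI[OF Um_carrier])
qed

lemma Um_image_Pm_kernel: "k > 0 \<Longrightarrow> mat_image (Um k :: 'a::field mat) = mat_kernel (Pm k)"
proof
  assume k: "k > 0"
  show "mat_image (Um k :: 'a mat) \<subseteq> mat_kernel (Pm k)"
  proof
    fix v assume "v \<in> mat_image (Um k :: 'a mat)"
    then obtain w where w: "w \<in> carrier_vec 1" and v: "v = Um k *\<^sub>v w" unfolding mat_image_def by auto
    have vc: "v \<in> carrier_vec k" using v w by (auto intro!: mult_mat_vec_carrier[OF Um_carrier])
    have "Pm k *\<^sub>v v = 0\<^sub>v (k - 1)" using Pm_vec[OF vc] v Um_vec[OF w] by (intro eq_vecI) auto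
    then show "v \<in> mat_kernel (Pm k)" using vc by (intro mat_kernelI[OF Pm_carrier])
  qed
  show "mat_kernel (Pm k) \<subseteq> mat_image (Um k :: 'a mat)"
  proof
    fix v :: "'a vec" assume "v \<in> mat_kernel (Pm k)"
    then have vc: "v \<in> carrier_vec k" and z: "Pm k *\<^sub>v v = 0\<^sub>v (k - 1)" using mat_kernelD[OF Pm_carrier] by auto
    have za: "v $ a = 0" if "a < k - 1" for a
    proof -
      have "(Pm k *\<^sub>v v) $ a = v $ a" using Pm_vec[OF vc] that by simp
      then show ?thesis using z that by simp
    qed
    define w :: "'a vec" where "w = vec 1 (\<lambda>_. v $ (k - 1))"
    have wc: "w \<in> carrier_vec 1" unfolding w_def by simp
    have e1: "Um k *\<^sub>v w = vec k (\<lambda>a. if a = k - 1 then v $ (k - 1) else 0)"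
    proof -
      have w0: "w $ 0 = v $ (k - 1)" unfolding w_def by (rule index_vec) simp
      show ?thesis unfolding Um_vec[where k=k, OF wc] w0 ..
    qed
    have e2: "vec k (\<lambda>a. if a = k - 1 then v $ (k - 1) else 0) = v"
    proof (rule eq_vecI)
      fix i assume "i < dim_vec v"
      then have i: "i < k" using vc by simp
      show "vec k (\<lambda>a. if a = k - 1 then v $ (k - 1) else 0) $ i = v $ i"
      proof (cases "i = k - 1")
        case False
        then have "i < k - 1" using i by simp
        then show ?thesis using za i by simp
      qed (use i in simp)
    qed (use vc in simp)
    have "Um k *\<^sub>v w = v" using e1 e2 by simp
    then show "v \<in> mat_image (Um k :: 'a mat)" unfolding mat_image_def using wc by force
  qed
qed

lemma Pm_image: "mat_image (Pm k :: 'a::field mat) = carrier_vec (k - 1)"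
proof
  show "mat_image (Pm k :: 'a mat) \<subseteq> carrier_vec (k - 1)" unfolding mat_image_def Pm_dims
    using mult_mat_vec_carrier[OF Pm_carrier[of k]] by blast
  show "carrier_vec (k - 1) \<subseteq> mat_image (Pm k :: 'a mat)"
  proof
    fix w :: "'a vec" assume w: "w \<in> carrier_vec (k - 1)"
    have "w = (Pm k * Rm k) *\<^sub>v w" using w by (simp add: Pm_Rm)
    also have "\<dots> = Pm k *\<^sub>v (Rm k *\<^sub>v w)" using w by (simp add: assoc_mult_mat_vec[OF Pm_carrier Rm_carrier w])
    finally have ww: "w = Pm k *\<^sub>v (Rm k *\<^sub>v w)" .
    have "Rm k *\<^sub>v w \<in> carrier_vec k" using mult_mat_vec_carrier[OF Rm_carrier w] .
    then show "w \<in> mat_image (Pm k :: 'a mat)" unfolding mat_image_def Pm_dims using ww by blast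
  qed
qed

lemma one_kernel_image: "mat_kernel (1\<^sub>m d :: 'a::field mat) = {0\<^sub>v d}" "mat_image (1\<^sub>m d :: 'a::field mat) = carrier_vec d"
  using iso_mats[of "1\<^sub>m d :: 'a mat" d d "1\<^sub>m d"] by auto

lemma pullback_fst[simp]: "fst (pullback e d m) q = d (e q)"
  unfolding pullback_def by simp

lemma pullback_snd: "snd (pullback e d m) q r = (if q \<le> r then m (e q) (e r) else 0\<^sub>m (d (e r)) (d (e q)))"
  unfolding pullback_def by simp

lemma is_functorD:
  assumes "is_functor D lp d m"
  shows "\<And>p q. p \<in> D \<Longrightarrow> q \<in> D \<Longrightarrow> lp p q \<Longrightarrow> m p q \<in> carrier_mat (d q) (d p)"
    "\<And>p. p \<in> D \<Longrightarrow> m p p = 1\<^sub>m (d p)"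
    "\<And>p q r. p \<in> D \<Longrightarrow> q \<in> D \<Longrightarrow> r \<in> D \<Longrightarrow> lp p q \<Longrightarrow> lp q r \<Longrightarrow> m p r = m q r * m p q"
  using assms unfolding is_functor_def by blast+

lemma is_functorI:
  assumes "\<And>p q. p \<in> D \<Longrightarrow> q \<in> D \<Longrightarrow> lp p q \<Longrightarrow> m p q \<in> carrier_mat (d q) (d p)"
    "\<And>p. p \<in> D \<Longrightarrow> m p p = 1\<^sub>m (d p)"
    "\<And>p q r. p \<in> D \<Longrightarrow> q \<in> D \<Longrightarrow> r \<in> D \<Longrightarrow> lp p q \<Longrightarrow> lp q r \<Longrightarrow> m p r = m q r * m p q"
  shows "is_functor D lp d m"
  unfolding is_functor_def using assms by blast

lemma pmodI:
  assumes "\<And>q r. q \<le> r \<Longrightarrow> snd M q r \<in> carrier_mat (fst M r) (fst M q)"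
    "\<And>q. snd M q q = 1\<^sub>m (fst M q)"
    "\<And>q r s. q \<le> r \<Longrightarrow> r \<le> s \<Longrightarrow> snd M q s = snd M r s * snd M q r"
    "\<And>q r. \<not> q \<le> r \<Longrightarrow> snd M q r = 0\<^sub>m (fst M r) (fst M q)"
  shows "pmod (M :: ('q::order, 'f::field) pmod)"
  unfolding Defs.pmod_def is_functor_def
  apply (intro conjI ballI allI impI)
     apply (metis assms(1))
    apply (metis assms(2))
   apply (metis assms(3))
  apply (metis assms(4))
  done

lemma pullback_pmod:
  fixes m :: "nat \<Rightarrow> nat \<Rightarrow> 'f::field mat"
  assumes E: "enc X n lp e" and F: "is_functor {..<n} lp d m"
  shows "pmod (pullback e d m :: ('q::order, 'f) pmod)"
proof (rule pmodI)
  have en: "\<And>q. e q \<in> {..<n}" using encD(4)[OF E] by simp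
  note mo = encD(5)[OF E]
  fix q r s :: 'q
  show "snd (pullback e d m) q r \<in> carrier_mat (fst (pullback e d m) r) (fst (pullback e d m) q)"
    if "q \<le> r"
  proof -
    have "m (e q) (e r) \<in> carrier_mat (d (e r)) (d (e q))" by (rule is_functorD(1)[OF F en en mo[OF that]])
    then show ?thesis using that by (simp add: pullback_snd)
  qed
  show "snd (pullback e d m) q q = 1\<^sub>m (fst (pullback e d m) q)"
  proof -
    have "m (e q) (e q) = 1\<^sub>m (d (e q))" by (rule is_functorD(2)[OF F en])
    then show ?thesis by (simp add: pullback_snd)
  qed
  show "snd (pullback e d m) q s = snd (pullback e d m) r s * snd (pullback e d m) q r"
    if "q \<le> r" "r \<le> s"
  proof -
    have qs: "q \<le> s" using that by (rule order_trans)
    have "m (e q) (e s) = m (e r) (e s) * m (e q) (e r)"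
      by (rule is_functorD(3)[OF F en en en mo[OF that(1)] mo[OF that(2)]])
    then show ?thesis using that qs by (simp add: pullback_snd)
  qed
  show "snd (pullback e d m) q r = 0\<^sub>m (fst (pullback e d m) r) (fst (pullback e d m) q)"
    if "\<not> q \<le> r"
    using that by (simp add: pullback_snd)
qed

lemma is_hom_intro:
  assumes "pmod M" "pmod N" "\<And>q. f q \<in> carrier_mat (fst N q) (fst M q)"
    "\<And>q r. q \<le> r \<Longrightarrow> snd N q r * f q = f r * snd M q r"
  shows "is_hom M N f"
  unfolding is_hom_def using assms by blast

lemma iso_refl:
  fixes M :: "('q::order, 'f::field) pmod"
  assumes M: "pmod M"
  shows "is_iso M M"
proof -
  have h: "is_hom M M (\<lambda>q. 1\<^sub>m (fst M q))"
  proof (rule is_hom_intro[OF M M])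
    fix q r :: 'q assume "q \<le> r"
    then have c: "snd M q r \<in> carrier_mat (fst M r) (fst M q)" using pmodD(1)[OF M] by blast
    show "snd M q r * 1\<^sub>m (fst M q) = 1\<^sub>m (fst M r) * snd M q r"
      using c by simp
  qed simp
  show ?thesis unfolding is_iso_def using h by (intro exI[of _ "\<lambda>q. 1\<^sub>m (fst M q)"]) auto
qed

lemma pullback_VectX:
  fixes m :: "nat \<Rightarrow> nat \<Rightarrow> 'f::field mat"
  assumes E: "enc X n lp e" and F: "is_functor {..<n} lp d m"
  shows "(pullback e d m :: ('q::order, 'f) pmod) \<in> VectX X"
  unfolding VectX_def using fin_encodedI[OF pullback_pmod[OF E F] E F iso_refl[OF pullback_pmod[OF E F]]] by simp

definition ind_d :: "nat \<Rightarrow> nat \<Rightarrow> nat" where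
  "ind_d p = (\<lambda>j. if j = p then 1 else 0)"
definition ind_m :: "nat \<Rightarrow> nat \<Rightarrow> nat \<Rightarrow> 'f::field mat" where
  "ind_m p = (\<lambda>j k. if j = p \<and> k = p then 1\<^sub>m 1 else 0\<^sub>m (ind_d p k) (ind_d p j))"

lemma ind_functor:
  assumes E: "enc X n lp e"
  shows "is_functor {..<n} lp (ind_d p) (ind_m p :: nat \<Rightarrow> nat \<Rightarrow> 'f::field mat)"
proof (rule is_functorI)
  note an = encD(2)[OF E]
  show "(ind_m p i j :: 'f mat) \<in> carrier_mat (ind_d p j) (ind_d p i)" for i j
    unfolding ind_m_def ind_d_def by simp
  show "ind_m p i i = (1\<^sub>m (ind_d p i) :: 'f mat)" for i
    unfolding ind_m_def ind_d_def by (auto intro: mat_eq_zero_dim)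
  show "(ind_m p i l :: 'f mat) = ind_m p j l * ind_m p i j" if "i \<in> {..<n}" "j \<in> {..<n}" "l \<in> {..<n}" "lp i j" "lp j l" for i j l
  proof (cases "i = p \<and> l = p")
    case True
    then have "j = p" using an that by auto
    then show ?thesis using True unfolding ind_m_def ind_d_def by simp
  next
    case False
    have c1: "(ind_m p j l :: 'f mat) \<in> carrier_mat (ind_d p l) (ind_d p j)" and c2: "(ind_m p i j :: 'f mat) \<in> carrier_mat (ind_d p j) (ind_d p i)"
      unfolding ind_m_def ind_d_def by simp_all
    have c3: "(ind_m p i l :: 'f mat) \<in> carrier_mat (ind_d p l) (ind_d p i)" unfolding ind_m_def ind_d_def by simp
    have "ind_d p l = 0 \<or> ind_d p i = 0" using False unfolding ind_d_def by auto
    then show ?thesis by (rule mat_eq_zero_dim[OF c3 mult_carrier_mat[OF c1 c2]])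
  qed
qed

lemma assoc6:
  fixes A :: "'a::comm_ring_1 mat"
  assumes A: "A \<in> carrier_mat a b" and B: "B \<in> carrier_mat b c" and C: "C \<in> carrier_mat c d"
    and D: "D \<in> carrier_mat d e" and E: "E \<in> carrier_mat e f" and G: "G \<in> carrier_mat f g"
  shows "(A * B * C) * (D * E * G) = A * B * (C * D) * E * G"
proof -
  note mc = mult_carrier_mat
  have X: "A * B \<in> carrier_mat a c" by (rule mc[OF A B])
  have DE: "D * E \<in> carrier_mat d f" by (rule mc[OF D E])
  have DEG: "D * E * G \<in> carrier_mat d g" by (rule mc[OF DE G])
  have CD: "C * D \<in> carrier_mat c e" by (rule mc[OF C D])
  have CDE: "C * D * E \<in> carrier_mat c f" by (rule mc[OF CD E])
  have "(A * B * C) * (D * E * G) = (A * B) * (C * (D * E * G))" by (rule assoc_mult_mat[OF X C DEG])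
  also have "C * (D * E * G) = (C * (D * E)) * G" by (rule assoc_mult_mat[OF C DE G, symmetric])
  also have "C * (D * E) = C * D * E" by (rule assoc_mult_mat[OF C D E, symmetric])
  also have "(A * B) * (C * D * E * G) = (A * B) * (C * D * E) * G" by (rule assoc_mult_mat[OF X CDE G, symmetric])
  also have "(A * B) * (C * D * E) = (A * B) * (C * D) * E" by (rule assoc_mult_mat[OF X CD E, symmetric])
  finally show ?thesis .
qed

lemma peel:
  fixes m :: "nat \<Rightarrow> nat \<Rightarrow> 'f::field mat"
  assumes E: "enc X n lp e" and F: "is_functor {..<n} lp d m" and p: "p < n" and dp: "0 < d p"
    and mx: "\<And>j. j < n \<Longrightarrow> lp p j \<Longrightarrow> j \<noteq> p \<Longrightarrow> d j = 0"
  shows "\<exists>m2 f g. is_functor {..<n} lp (d(p := d p - 1)) m2 \<and>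
     short_exact (pullback e (ind_d p) (ind_m p) :: ('q::order, 'f) pmod) (pullback e d m)
        (pullback e (d(p := d p - 1)) m2) f g"
proof -
  define k where "k = d p"
  define d2 where "d2 = d(p := k - 1)"
  define L :: "nat \<Rightarrow> 'f mat" where "L = (\<lambda>j. if j = p then Pm k else 1\<^sub>m (d j))"
  define R :: "nat \<Rightarrow> 'f mat" where "R = (\<lambda>j. if j = p then Rm k else 1\<^sub>m (d j))"
  define m2 where "m2 = (\<lambda>i j. L j * m i j * R i)"
  have k0: "0 < k" using dp k_def by simp
  have Lc: "L j \<in> carrier_mat (d2 j) (d j)" for j unfolding L_def d2_def k_def by auto
  have Rc: "R j \<in> carrier_mat (d j) (d2 j)" for j unfolding R_def d2_def k_def by auto
  have LR: "L j * R j = 1\<^sub>m (d2 j)" for j unfolding L_def R_def d2_def by (auto simp: Pm_Rm)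
  have RL: "R j * L j = 1\<^sub>m (d j)" if "j \<noteq> p" for j unfolding L_def R_def using that by auto
  have mc: "m i j \<in> carrier_mat (d j) (d i)" if "i < n" "j < n" "lp i j" for i j
    using is_functorD(1)[OF F] that by auto
  have m2c: "m2 i j \<in> carrier_mat (d2 j) (d2 i)" if "i < n" "j < n" "lp i j" for i j
    unfolding m2_def using Lc mc[OF that] Rc by (intro mult_carrier_mat) auto
  have mid: "m i i = 1\<^sub>m (d i)" if "i < n" for i using is_functorD(2)[OF F] that by auto
  have mcomp: "m i l = m j l * m i j" if "i < n" "j < n" "l < n" "lp i j" "lp j l" for i j l
    using is_functorD(3)[OF F] that by auto
  have d2z: "d2 j = 0" if "j < n" "lp p j" "j \<noteq> p" for j using mx[OF that] that unfolding d2_def by simp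
  have d2ne: "d2 j = d j" if "j \<noteq> p" for j using that unfolding d2_def by simp
  have d2p: "d2 p = k - 1" unfolding d2_def by simp
  have dp': "d p = k" unfolding k_def ..
  have FC: "is_functor {..<n} lp d2 m2"
  proof (rule is_functorI)
    show "m2 i j \<in> carrier_mat (d2 j) (d2 i)" if "i \<in> {..<n}" "j \<in> {..<n}" "lp i j" for i j
      using m2c that by auto
    show "m2 i i = 1\<^sub>m (d2 i)" if "i \<in> {..<n}" for i
    proof -
      have "m2 i i = L i * 1\<^sub>m (d i) * R i" unfolding m2_def using mid that by simp
      also have "\<dots> = L i * R i" using Lc[of i] by simp
      also have "\<dots> = 1\<^sub>m (d2 i)" by (rule LR)
      finally show ?thesis .
    qed
    show "m2 i l = m2 j l * m2 i j" if "i \<in> {..<n}" "j \<in> {..<n}" "l \<in> {..<n}" "lp i j" "lp j l" for i j l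
    proof -
      have i: "i < n" and j: "j < n" and l: "l < n" using that by auto
      have il: "lp i l" using encD(3)[OF E i j l] that by blast
      note c_il = mc[OF i l il] and c_jl = mc[OF j l that(5)] and c_ij = mc[OF i j that(4)]
      show ?thesis
      proof (cases "j = p")
        case False
        have "m2 j l * m2 i j = (L l * m j l * R j) * (L j * m i j * R i)" unfolding m2_def ..
        also have "\<dots> = L l * m j l * (R j * L j) * m i j * R i"
          by (rule assoc6[OF Lc[of l] c_jl Rc[of j] Lc[of j] c_ij Rc[of i]])
        also have "\<dots> = L l * (m j l * m i j) * R i"
          using Lc[of l] c_jl c_ij Rc[of i] RL[OF False] by (simp add: assoc_mult_mat[of _ "d2 l"])
        also have "\<dots> = m2 i l" unfolding m2_def using mcomp[OF i j l that(4,5)] by simp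
        finally show ?thesis ..
      next
        case True
        show ?thesis
        proof (cases "l = p")
          case True
          have mpp: "m p p = 1\<^sub>m k" using mid[OF p] dp' by simp
          have Lp: "L p = Pm k" and Rp: "R p = Rm k" unfolding L_def R_def by simp_all
          have cip: "m i p \<in> carrier_mat k (d i)" using c_ij \<open>j = p\<close> dp' by simp
          have "m2 j l * m2 i j = (Pm k * 1\<^sub>m k * Rm k) * (Pm k * m i p * R i)"
            unfolding m2_def using \<open>j = p\<close> True mpp Lp Rp by simp
          also have "\<dots> = (Pm k * Rm k) * (Pm k * m i p * R i)" by simp
          also have "\<dots> = Pm k * m i p * R i" unfolding Pm_Rm
            using cip Rc[of i] by (intro left_mult_one_mat) auto
          also have "\<dots> = m2 i l" unfolding m2_def using True Lp by simp
          finally show ?thesis ..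
        next
          case False
          have "d2 l = 0" using d2z[OF l] that(5) \<open>j = p\<close> False by simp
          moreover have "m2 j l * m2 i j \<in> carrier_mat (d2 l) (d2 i)"
            using m2c[OF j l that(5)] m2c[OF i j that(4)] by (rule mult_carrier_mat)
          ultimately show ?thesis using m2c[OF i l il] by (intro mat_eq_zero_dim) auto
        qed
      qed
    qed
  qed
  define f :: "'q \<Rightarrow> 'f mat" where "f = (\<lambda>q. if e q = p then Um k else 0\<^sub>m (d (e q)) 0)"
  define g :: "'q \<Rightarrow> 'f mat" where "g = (\<lambda>q. L (e q))"
  define N :: "('q, 'f) pmod" where "N = pullback e (ind_d p) (ind_m p)"
  define M :: "('q, 'f) pmod" where "M = pullback e d m"
  define C :: "('q, 'f) pmod" where "C = pullback e d2 m2"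
  have en: "e q < n" for q using encD(4)[OF E] .
  note mo = encD(5)[OF E]
  have pN: "pmod N" unfolding N_def by (rule pullback_pmod[OF E ind_functor[OF E]])
  have pM: "pmod M" unfolding M_def by (rule pullback_pmod[OF E F])
  have pC: "pmod C" unfolding C_def by (rule pullback_pmod[OF E FC])
  have fN: "fst N q = ind_d p (e q)" for q unfolding N_def by simp
  have fM: "fst M q = d (e q)" for q unfolding M_def by simp
  have fC: "fst C q = d2 (e q)" for q unfolding C_def by simp
  have sN: "snd N q r = ind_m p (e q) (e r)" if "q \<le> r" for q r unfolding N_def using that by (simp add: pullback_snd)
  have sM: "snd M q r = m (e q) (e r)" if "q \<le> r" for q r unfolding M_def using that by (simp add: pullback_snd)
  have sC: "snd C q r = m2 (e q) (e r)" if "q \<le> r" for q r unfolding C_def using that by (simp add: pullback_snd)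
  have fc: "f q \<in> carrier_mat (fst M q) (fst N q)" for q
    unfolding f_def fM fN ind_d_def using dp' by auto
  have gc: "g q \<in> carrier_mat (fst C q) (fst M q)" for q
    unfolding g_def fM fC using Lc .
  have homf: "is_hom N M f"
  proof (rule is_hom_intro[OF pN pM fc])
    fix q r :: 'q assume qr: "q \<le> r"
    have c1: "snd M q r * f q \<in> carrier_mat (fst M r) (fst N q)"
      using pmodD(1)[OF pM qr] fc by (rule mult_carrier_mat)
    have c2: "f r * snd N q r \<in> carrier_mat (fst M r) (fst N q)"
      using fc pmodD(1)[OF pN qr] by (rule mult_carrier_mat)
    show "snd M q r * f q = f r * snd N q r"
    proof (cases "e q = p")
      case qp: True
      show ?thesis
      proof (cases "e r = p")
        case True
        have "snd M q r = 1\<^sub>m k" using sM[OF qr] qp True mid[OF p] dp' by simp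
        moreover have "snd N q r = 1\<^sub>m 1" using sN[OF qr] qp True unfolding ind_m_def by simp
        ultimately show ?thesis unfolding f_def using qp True by simp
      next
        case False
        have "lp p (e r)" using mo[OF qr] qp by simp
        then have "fst M r = 0" using mx[OF en] False fM by simp
        then show ?thesis using c1 c2 by (intro mat_eq_zero_dim) auto
      qed
    next
      case False
      then have "fst N q = 0" unfolding fN ind_d_def by simp
      then show ?thesis using c1 c2 by (intro mat_eq_zero_dim) auto
    qed
  qed
  have homg: "is_hom M C g"
  proof (rule is_hom_intro[OF pM pC gc])
    fix q r :: 'q assume qr: "q \<le> r"
    have c1: "snd C q r * g q \<in> carrier_mat (fst C r) (fst M q)"
      using pmodD(1)[OF pC qr] gc by (rule mult_carrier_mat)
    have c2: "g r * snd M q r \<in> carrier_mat (fst C r) (fst M q)"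
      using gc pmodD(1)[OF pM qr] by (rule mult_carrier_mat)
    have lqr: "lp (e q) (e r)" using mo[OF qr] .
    note cm = mc[OF en en lqr]
    show "snd C q r * g q = g r * snd M q r"
    proof (cases "e q = p")
      case False
      have "snd C q r * g q = L (e r) * m (e q) (e r) * R (e q) * L (e q)"
        unfolding sC[OF qr] m2_def g_def ..
      also have "\<dots> = L (e r) * m (e q) (e r) * (R (e q) * L (e q))"
        using Lc cm Rc by (intro assoc_mult_mat) (auto intro: mult_carrier_mat)
      also have "\<dots> = L (e r) * m (e q) (e r)" unfolding RL[OF False]
        using Lc cm by (intro right_mult_one_mat) (auto intro: mult_carrier_mat)
      also have "\<dots> = g r * snd M q r" unfolding sM[OF qr] g_def ..
      finally show ?thesis .
    next
      case qp: True
      show ?thesis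
      proof (cases "e r = p")
        case True
        have mpp: "m p p = 1\<^sub>m k" using mid[OF p] dp' by simp
        have "snd C q r * g q = (Pm k * 1\<^sub>m k * Rm k) * Pm k"
          unfolding sC[OF qr] m2_def g_def L_def R_def using qp True mpp by simp
        also have "\<dots> = Pm k" by (simp add: Pm_Rm)
        also have "\<dots> = g r * snd M q r" unfolding sM[OF qr] g_def L_def using qp True mpp by simp
        finally show ?thesis .
      next
        case False
        have "lp p (e r)" using lqr qp by simp
        then have "fst C r = 0" using d2z[OF en] False fC by simp
        then show ?thesis using c1 c2 by (intro mat_eq_zero_dim) auto
      qed
    qed
  qed
  have ex: "mat_kernel (f q) = {0\<^sub>v (fst N q)} \<and> mat_image (f q) = mat_kernel (g q) \<and>
      mat_image (g q) = carrier_vec (fst C q)" for q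
  proof (cases "e q = p")
    case True
    have "f q = Um k" "g q = Pm k" "fst N q = 1" "fst C q = k - 1"
      unfolding f_def g_def L_def fN fC ind_d_def using True d2p by simp_all
    then show ?thesis using Um_kernel[OF k0] Um_image_Pm_kernel[OF k0] Pm_image[where 'a='f] by simp
  next
    case False
    have "f q = 0\<^sub>m (d (e q)) 0" "g q = 1\<^sub>m (d (e q))" "fst N q = 0" "fst C q = d (e q)"
      unfolding f_def g_def L_def fN fC ind_d_def using False d2ne by simp_all
    then show ?thesis using kernel_zero_cols[where 'a='f] image_zero_cols[where 'a='f] one_kernel_image[where 'a='f] by simp
  qed
  have "short_exact N M C f g" unfolding short_exact_def using homf homg ex by blast
  moreover have "d2 = d(p := d p - 1)" unfolding d2_def k_def ..
  ultimately show ?thesis using FC unfolding N_def M_def C_def by blast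
qed

lemma exists_max:
  assumes E: "enc X n lp e" and S: "finite S" "S \<noteq> {}" "S \<subseteq> {..<n}"
  shows "\<exists>p\<in>S. \<forall>j\<in>S. lp p j \<longrightarrow> j = p"
  using S
proof (induction S rule: finite_ne_induct)
  case (singleton x)
  then show ?case by simp
next
  case (insert x F)
  then obtain p where p: "p \<in> F" "\<forall>j\<in>F. lp p j \<longrightarrow> j = p" by auto
  have xn: "x < n" and Fn: "F \<subseteq> {..<n}" using insert.prems by auto
  show ?case
  proof (cases "lp p x \<and> x \<noteq> p")
    case True
    have "\<forall>j\<in>insert x F. lp x j \<longrightarrow> j = x"
    proof (intro ballI impI)
      fix j assume j: "j \<in> insert x F" "lp x j"
      show "j = x"
      proof (rule ccontr)
        assume jx: "j \<noteq> x"
        then have jF: "j \<in> F" using j by auto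
        have pn: "p < n" using p Fn by auto
        have jn: "j < n" using jF Fn by auto
        have "lp p j" using encD(3)[OF E pn xn jn] True j by blast
        then have "j = p" using p jF by blast
        then have "x = p" using encD(2)[OF E xn pn] True j by blast
        then show False using True by simp
      qed
    qed
    then show ?thesis by blast
  next
    case False
    have "\<forall>j\<in>insert x F. lp p j \<longrightarrow> j = p" using False p by auto
    then show ?thesis using p by blast
  qed
qed

lemma K_formula:
  fixes \<alpha> :: "('q::order, 'f::field) pmod \<Rightarrow> ennreal" and m :: "nat \<Rightarrow> nat \<Rightarrow> 'f mat"
  assumes aa: "additive_amplitude (VectX X) \<alpha>" and z: "zero_pmod \<in> VectX X" and E: "enc X n lp e"
  shows "is_functor {..<n} lp d m \<Longrightarrow> \<alpha> (pullback e d m :: ('q, 'f) pmod) =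
     (\<Sum>i<n. of_nat (d i) * \<alpha> (pullback e (ind_d i) (ind_m i) :: ('q, 'f) pmod))"
proof (induction "\<Sum>i<n. d i" arbitrary: d m rule: less_induct)
  case less
  define \<beta> where "\<beta> = (\<lambda>i. \<alpha> (pullback e (ind_d i) (ind_m i) :: ('q, 'f) pmod))"
  have amp: "amplitude (VectX X) \<alpha>" using aa unfolding additive_amplitude_def by blast
  show ?case
  proof (cases "\<forall>i<n. d i = 0")
    case True
    have "\<alpha> (pullback e d m :: ('q, 'f) pmod) = 0"
      by (rule amp_zero[OF amp pullback_VectX[OF E less.prems]]) (use True encD(4)[OF E] in simp)
    moreover have "(\<Sum>i<n. of_nat (d i) * \<beta> i) = 0" using True by simp
    ultimately show ?thesis unfolding \<beta>_def by simp
  next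
    case False
    define S where "S = {i. i < n \<and> d i \<noteq> 0}"
    have "S \<noteq> {}" using False unfolding S_def by auto
    then obtain p where pS: "p \<in> S" and pm: "\<forall>j\<in>S. lp p j \<longrightarrow> j = p"
      using exists_max[OF E, of S] unfolding S_def by auto
    have p: "p < n" and dp: "0 < d p" using pS unfolding S_def by auto
    have mx: "d j = 0" if "j < n" "lp p j" "j \<noteq> p" for j using pm that unfolding S_def by auto
    obtain m2 f g where F2: "is_functor {..<n} lp (d(p := d p - 1)) m2" and
      se: "short_exact (pullback e (ind_d p) (ind_m p) :: ('q, 'f) pmod) (pullback e d m)
        (pullback e (d(p := d p - 1)) m2) f g"
      using peel[OF E less.prems p dp mx] by blast
    define d2 where "d2 = d(p := d p - 1)"
    have split: "(\<Sum>i<n. h i) = h p + (\<Sum>i\<in>{..<n} - {p}. h i)" for h :: "nat \<Rightarrow> 'b::comm_monoid_add"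
      using p by (simp add: sum.remove)
    have rest: "(\<Sum>i\<in>{..<n} - {p}. h (d2 i) i) = (\<Sum>i\<in>{..<n} - {p}. h (d i) i)" for h :: "nat \<Rightarrow> nat \<Rightarrow> 'b::comm_monoid_add"
      unfolding d2_def by (intro sum.cong) auto
    have lt: "(\<Sum>i<n. d2 i) < (\<Sum>i<n. d i)"
      using split[of d2] split[of d] rest[of "\<lambda>a b. a"] dp unfolding d2_def by simp
    have IH: "\<alpha> (pullback e d2 m2 :: ('q, 'f) pmod) = (\<Sum>i<n. of_nat (d2 i) * \<beta> i)"
      unfolding \<beta>_def by (rule less.hyps[OF lt]) (use F2 in \<open>simp add: d2_def fun_upd_def\<close>)
    have "\<alpha> (pullback e d m :: ('q, 'f) pmod) = \<beta> p + \<alpha> (pullback e d2 m2 :: ('q, 'f) pmod)"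
      unfolding \<beta>_def d2_def
      by (rule add_amp[OF aa pullback_VectX[OF E ind_functor[OF E]] pullback_VectX[OF E less.prems]
          pullback_VectX[OF E F2] se])
    also have "\<dots> = \<beta> p + (of_nat (d p - 1) * \<beta> p + (\<Sum>i\<in>{..<n} - {p}. of_nat (d i) * \<beta> i))"
      unfolding IH split[of "\<lambda>i. of_nat (d2 i) * \<beta> i"] rest[of "\<lambda>a i. of_nat a * \<beta> i"]
      unfolding d2_def by simp
    also have "\<dots> = of_nat (d p) * \<beta> p + (\<Sum>i\<in>{..<n} - {p}. of_nat (d i) * \<beta> i)"
    proof -
      obtain k where k: "d p = Suc k" using dp by (cases "d p") auto
      have "of_nat (d p) = (1::ennreal) + of_nat (d p - 1)" unfolding k by simp
      then have "of_nat (d p) * \<beta> p = \<beta> p + of_nat (d p - 1) * \<beta> p" by (simp add: distrib_right)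
      then show ?thesis by (simp add: add.assoc)
    qed
    also have "\<dots> = (\<Sum>i<n. of_nat (d i) * \<beta> i)" by (rule split[symmetric])
    finally show ?thesis unfolding \<beta>_def .
  qed
qed

lemma prod_enc:
  assumes X: "Sigma_Algebra.algebra UNIV X" and E1: "enc X n1 lp1 e1" and E2: "enc X n2 lp2 e2"
  shows "enc X (n1 * n2) (\<lambda>a b. lp1 (a div n2) (b div n2) \<and> lp2 (a mod n2) (b mod n2)) (\<lambda>q. e1 q * n2 + e2 q)"
proof -
  have e2n: "e2 q < n2" for q by (rule encD(4)[OF E2])
  have e1n: "e1 q < n1" for q by (rule encD(4)[OF E1])
  have n2: "0 < n2" using e2n[of undefined] by simp
  have dv: "(e1 q * n2 + e2 q) div n2 = e1 q" for q using e2n[of q] n2 by simp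
  have md: "(e1 q * n2 + e2 q) mod n2 = e2 q" for q using e2n[of q] by simp
  have dlt: "a div n2 < n1" if "a < n1 * n2" for a using that by (simp add: less_mult_imp_div_less)
  have mlt: "a mod n2 < n2" for a using n2 by simp
  show ?thesis
  proof (rule encI)
    show "lp1 (i div n2) (i div n2) \<and> lp2 (i mod n2) (i mod n2)" if "i < n1 * n2" for i
      using encD(1)[OF E1 dlt[OF that]] encD(1)[OF E2 mlt] by simp
    show "i = j" if "i < n1 * n2" "j < n1 * n2" "lp1 (i div n2) (j div n2) \<and> lp2 (i mod n2) (j mod n2)"
       "lp1 (j div n2) (i div n2) \<and> lp2 (j mod n2) (i mod n2)" for i j
    proof -
      have "i div n2 = j div n2" using encD(2)[OF E1 dlt[OF that(1)] dlt[OF that(2)]] that(3,4) by blast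
      moreover have "i mod n2 = j mod n2" using encD(2)[OF E2 mlt mlt] that(3,4) by blast
      ultimately show ?thesis by (metis div_mult_mod_eq)
    qed
    show "lp1 (i div n2) (k div n2) \<and> lp2 (i mod n2) (k mod n2)" if "i < n1 * n2" "j < n1 * n2" "k < n1 * n2"
      "lp1 (i div n2) (j div n2) \<and> lp2 (i mod n2) (j mod n2)" "lp1 (j div n2) (k div n2) \<and> lp2 (j mod n2) (k mod n2)"
      for i j k
      using encD(3)[OF E1 dlt[OF that(1)] dlt[OF that(2)] dlt[OF that(3)]]
        encD(3)[OF E2 mlt mlt mlt] that(4,5) by blast
    show "e1 q * n2 + e2 q < n1 * n2" for q
    proof -
      have "e1 q * n2 + e2 q < e1 q * n2 + n2" using e2n[of q] by simp
      also have "\<dots> = (e1 q + 1) * n2" by simp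
      also have "\<dots> \<le> n1 * n2" using e1n[of q] by (intro mult_right_mono) auto
      finally show ?thesis .
    qed
    show "lp1 ((e1 q * n2 + e2 q) div n2) ((e1 r * n2 + e2 r) div n2) \<and>
          lp2 ((e1 q * n2 + e2 q) mod n2) ((e1 r * n2 + e2 r) mod n2)" if "q \<le> r" for q r
      unfolding dv md using encD(5)[OF E1 that] encD(5)[OF E2 that] by simp
    show "(\<lambda>q. e1 q * n2 + e2 q) -` {i} \<in> X" if "i < n1 * n2" for i
    proof -
      interpret Sigma_Algebra.algebra UNIV X by fact
      have "(\<lambda>q. e1 q * n2 + e2 q) -` {i} = e1 -` {i div n2} \<inter> e2 -` {i mod n2}"
      proof (rule Set.set_eqI)
        fix q
        show "q \<in> (\<lambda>q. e1 q * n2 + e2 q) -` {i} \<longleftrightarrow> q \<in> e1 -` {i div n2} \<inter> e2 -` {i mod n2}"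
          using dv[of q] md[of q] div_mult_mod_eq[of i n2] by auto
      qed
      also have "\<dots> \<in> X" using enc_preimage_X[OF X E1] enc_preimage_X[OF X E2] by (intro Int) auto
      finally show ?thesis .
    qed
  qed
qed

lemma pullback_cong:
  assumes "\<And>q. d (e q) = d' (e' q)" "\<And>q r. q \<le> r \<Longrightarrow> m (e q) (e r) = m' (e' q) (e' r)"
  shows "pullback e d m = pullback e' d' m'"
  unfolding pullback_def using assms by (auto intro!: ext)

lemma dim_dep:
  fixes \<alpha> :: "('q::order, 'f::field) pmod \<Rightarrow> ennreal" and M N :: "('q, 'f) pmod"
  assumes X: "Sigma_Algebra.algebra UNIV X" and aa: "additive_amplitude (VectX X) \<alpha>"
    and z: "(zero_pmod :: ('q, 'f) pmod) \<in> VectX X"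
    and M: "M \<in> VectX X" and N: "N \<in> VectX X" and fMN: "\<And>q. fst M q = fst N q"
  shows "\<alpha> M = \<alpha> N"
proof -
  obtain n1 lp1 e1 d1 and m1 :: "nat \<Rightarrow> nat \<Rightarrow> 'f mat" where E1: "enc X n1 lp1 e1"
    and F1: "is_functor {..<n1} lp1 d1 m1" and I1: "is_iso M (pullback e1 d1 m1)"
    using M unfolding VectX_def by (auto elim: fin_encodedE)
  obtain n2 lp2 e2 d2 and m2 :: "nat \<Rightarrow> nat \<Rightarrow> 'f mat" where E2: "enc X n2 lp2 e2"
    and F2: "is_functor {..<n2} lp2 d2 m2" and I2: "is_iso N (pullback e2 d2 m2)"
    using N unfolding VectX_def by (auto elim: fin_encodedE)
  define n where "n = n1 * n2"
  define lp where "lp = (\<lambda>a b. lp1 (a div n2) (b div n2) \<and> lp2 (a mod n2) (b mod n2))"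
  define e where "e = (\<lambda>q. e1 q * n2 + e2 q)"
  have E: "enc X n lp e" unfolding n_def lp_def e_def by (rule prod_enc[OF X E1 E2])
  have e2n: "e2 q < n2" for q by (rule encD(4)[OF E2])
  have n2: "0 < n2" using e2n[of undefined] by simp
  have dv: "e q div n2 = e1 q" for q unfolding e_def using e2n[of q] n2 by simp
  have md: "e q mod n2 = e2 q" for q unfolding e_def using e2n[of q] by simp
  have dlt: "a div n2 < n1" if "a < n" for a using that unfolding n_def by (simp add: less_mult_imp_div_less)
  have mlt: "a mod n2 < n2" for a using n2 by simp
  define D1 where "D1 = (\<lambda>k. d1 (k div n2))"
  define M1 where "M1 = (\<lambda>k l. m1 (k div n2) (l div n2))"
  define D2 where "D2 = (\<lambda>k. d2 (k mod n2))"
  define M2 where "M2 = (\<lambda>k l. m2 (k mod n2) (l mod n2))"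
  have FD1: "is_functor {..<n} lp D1 M1"
  proof (rule is_functorI)
    show "M1 i j \<in> carrier_mat (D1 j) (D1 i)" if "i \<in> {..<n}" "j \<in> {..<n}" "lp i j" for i j
      unfolding M1_def D1_def using is_functorD(1)[OF F1] dlt that unfolding lp_def by auto
    show "M1 i i = 1\<^sub>m (D1 i)" if "i \<in> {..<n}" for i
      unfolding M1_def D1_def using is_functorD(2)[OF F1] dlt that by auto
    show "M1 i k = M1 j k * M1 i j" if "i \<in> {..<n}" "j \<in> {..<n}" "k \<in> {..<n}" "lp i j" "lp j k" for i j k
      unfolding M1_def using is_functorD(3)[OF F1] dlt that unfolding lp_def by auto
  qed
  have FD2: "is_functor {..<n} lp D2 M2"
  proof (rule is_functorI)
    show "M2 i j \<in> carrier_mat (D2 j) (D2 i)" if "i \<in> {..<n}" "j \<in> {..<n}" "lp i j" for i j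
      unfolding M2_def D2_def using is_functorD(1)[OF F2] mlt that unfolding lp_def by auto
    show "M2 i i = 1\<^sub>m (D2 i)" if "i \<in> {..<n}" for i
      unfolding M2_def D2_def using is_functorD(2)[OF F2] mlt that by auto
    show "M2 i k = M2 j k * M2 i j" if "i \<in> {..<n}" "j \<in> {..<n}" "k \<in> {..<n}" "lp i j" "lp j k" for i j k
      unfolding M2_def using is_functorD(3)[OF F2] mlt that unfolding lp_def by auto
  qed
  have P1: "pullback e1 d1 m1 = (pullback e D1 M1 :: ('q, 'f) pmod)"
    by (rule pullback_cong) (simp_all add: D1_def M1_def dv)
  have P2: "pullback e2 d2 m2 = (pullback e D2 M2 :: ('q, 'f) pmod)"
    by (rule pullback_cong) (simp_all add: D2_def M2_def md)
  define \<beta> where "\<beta> = (\<lambda>i. \<alpha> (pullback e (ind_d i) (ind_m i) :: ('q, 'f) pmod))"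
  have "\<alpha> M = \<alpha> (pullback e1 d1 m1)"
    by (rule alpha_iso[OF aa z M _ I1]) (rule pullback_VectX[OF E1 F1])
  also have "\<dots> = \<alpha> (pullback e D1 M1)" using P1 by simp
  also have "\<dots> = (\<Sum>i<n. of_nat (D1 i) * \<beta> i)" unfolding \<beta>_def by (rule K_formula[OF aa z E FD1])
  also have "\<dots> = (\<Sum>i<n. of_nat (D2 i) * \<beta> i)"
  proof (rule sum.cong[OF refl])
    fix i assume "i \<in> {..<n}"
    show "of_nat (D1 i) * \<beta> i = of_nat (D2 i) * \<beta> i"
    proof (cases "\<exists>q. e q = i")
      case True
      then obtain q where q: "e q = i" by blast
      have "D1 i = fst M q" using iso_dims[OF I1, of q] dv[of q] unfolding D1_def q[symmetric] by simp
      also have "\<dots> = fst N q" by (rule fMN)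
      also have "\<dots> = D2 i" using iso_dims[OF I2, of q] md[of q] unfolding D2_def q[symmetric] by simp
      finally show ?thesis by simp
    next
      case False
      have amp: "amplitude (VectX X) \<alpha>" using aa unfolding additive_amplitude_def by blast
      have "\<beta> i = 0" unfolding \<beta>_def
        by (rule amp_zero[OF amp pullback_VectX[OF E ind_functor[OF E]]]) (use False in \<open>auto simp: ind_d_def\<close>)
      then show ?thesis by simp
    qed
  qed
  also have "\<dots> = \<alpha> (pullback e D2 M2)" unfolding \<beta>_def by (rule K_formula[OF aa z E FD2, symmetric])
  also have "\<dots> = \<alpha> (pullback e2 d2 m2)" using P2 by simp
  also have "\<dots> = \<alpha> N"
    by (rule alpha_iso[OF aa z N _ I2, symmetric]) (rule pullback_VectX[OF E2 F2])
  finally show ?thesis .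
qed

lemma vec_cancel:
  assumes "x \<in> carrier_vec n" "y \<in> carrier_vec n" "x = x + y"
  shows "y = (0\<^sub>v n :: 'a::field vec)"
proof (rule eq_vecI)
  fix i assume "i < dim_vec (0\<^sub>v n :: 'a vec)"
  then have i: "i < n" by simp
  have "x $ i = (x + y) $ i" using assms(3) by simp
  also have "\<dots> = x $ i + y $ i" using assms(2) i by simp
  finally show "y $ i = (0\<^sub>v n :: 'a vec) $ i" using i by simp
qed (use assms in simp)

lemma biprod_mats:
  fixes i1 :: "'a::field mat"
  assumes i1: "i1 \<in> carrier_mat s a" and i2: "i2 \<in> carrier_mat s b"
    and p1: "p1 \<in> carrier_mat a s" and p2: "p2 \<in> carrier_mat b s"
    and e1: "p1 * i1 = 1\<^sub>m a" and e2: "p2 * i2 = 1\<^sub>m b" and e3: "i1 * p1 + i2 * p2 = 1\<^sub>m s"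
  shows "mat_kernel i1 = {0\<^sub>v a} \<and> mat_image i1 = mat_kernel p2 \<and> mat_image p2 = carrier_vec b"
proof -
  have dec: "x = i1 *\<^sub>v (p1 *\<^sub>v x) + i2 *\<^sub>v (p2 *\<^sub>v x)" if x: "x \<in> carrier_vec s" for x
  proof -
    have "x = (i1 * p1 + i2 * p2) *\<^sub>v x" using e3 x by simp
    also have "\<dots> = (i1 * p1) *\<^sub>v x + (i2 * p2) *\<^sub>v x"
      using i1 p1 i2 p2 x by (intro add_mult_distrib_mat_vec) auto
    also have "\<dots> = i1 *\<^sub>v (p1 *\<^sub>v x) + i2 *\<^sub>v (p2 *\<^sub>v x)"
      using i1 p1 i2 p2 x by (simp add: assoc_mult_mat_vec)
    finally show ?thesis .
  qed
  have k1: "mat_kernel i1 = {0\<^sub>v a}" using iso_mats(1)[of i1 s a p1] i1 p1 e1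
  proof -
    show ?thesis
    proof
      show "mat_kernel i1 \<subseteq> {0\<^sub>v a}"
      proof
        fix v assume "v \<in> mat_kernel i1"
        then have vc: "v \<in> carrier_vec a" and iv: "i1 *\<^sub>v v = 0\<^sub>v s" using mat_kernelD[OF i1] by auto
        have "v = (p1 * i1) *\<^sub>v v" using e1 vc by simp
        also have "\<dots> = p1 *\<^sub>v (i1 *\<^sub>v v)" using p1 i1 vc by simp
        also have "\<dots> = 0\<^sub>v a" using iv p1 by (simp add: mat_vec_zero)
        finally show "v \<in> {0\<^sub>v a}" by simp
      qed
      show "{0\<^sub>v a} \<subseteq> mat_kernel i1" using i1 by (auto intro: mat_kernelI simp: mat_vec_zero)
    qed
  qed
  have im2: "mat_image p2 = carrier_vec b"
  proof
    show "mat_image p2 \<subseteq> carrier_vec b" unfolding mat_image_def using p2 by auto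
    show "carrier_vec b \<subseteq> mat_image p2"
    proof
      fix w :: "'a vec" assume w: "w \<in> carrier_vec b"
      have "w = (p2 * i2) *\<^sub>v w" using e2 w by simp
      also have "\<dots> = p2 *\<^sub>v (i2 *\<^sub>v w)" using p2 i2 w by simp
      finally have ww: "w = p2 *\<^sub>v (i2 *\<^sub>v w)" .
      have "i2 *\<^sub>v w \<in> carrier_vec s" using i2 w by simp
      then show "w \<in> mat_image p2" unfolding mat_image_def using p2 ww by auto
    qed
  qed
  have ik: "mat_image i1 = mat_kernel p2"
  proof
    show "mat_image i1 \<subseteq> mat_kernel p2"
    proof
      fix x assume "x \<in> mat_image i1"
      then obtain v where vc: "v \<in> carrier_vec a" and xv: "x = i1 *\<^sub>v v" unfolding mat_image_def using i1 by auto
      have xc: "x \<in> carrier_vec s" using xv vc i1 by simp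
      have "p1 *\<^sub>v x = (p1 * i1) *\<^sub>v v" using xv p1 i1 vc by simp
      also have "\<dots> = v" using e1 vc by simp
      finally have "x = x + i2 *\<^sub>v (p2 *\<^sub>v x)" using dec[OF xc] xv by simp
      then have z: "i2 *\<^sub>v (p2 *\<^sub>v x) = 0\<^sub>v s" using xc i2 p2 by (intro vec_cancel) auto
      have "p2 *\<^sub>v x = (p2 * i2) *\<^sub>v (p2 *\<^sub>v x)" using e2 p2 xc by simp
      also have "\<dots> = p2 *\<^sub>v (i2 *\<^sub>v (p2 *\<^sub>v x))" using p2 i2 xc by simp
      also have "\<dots> = 0\<^sub>v b" unfolding z using p2 by (simp add: mat_vec_zero)
      finally show "x \<in> mat_kernel p2" using xc by (intro mat_kernelI[OF p2])
    qed
    show "mat_kernel p2 \<subseteq> mat_image i1"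
    proof
      fix w assume "w \<in> mat_kernel p2"
      then have wc: "w \<in> carrier_vec s" and pw: "p2 *\<^sub>v w = 0\<^sub>v b" using mat_kernelD[OF p2] by auto
      have "w = i1 *\<^sub>v (p1 *\<^sub>v w) + i2 *\<^sub>v 0\<^sub>v b" using dec[OF wc] pw by simp
      also have "\<dots> = i1 *\<^sub>v (p1 *\<^sub>v w)" using i2 i1 p1 wc by (simp add: mat_vec_zero)
      finally show "w \<in> mat_image i1" unfolding mat_image_def using i1 p1 wc by auto
    qed
  qed
  show ?thesis using k1 ik im2 by simp
qed

lemma biprod_obtain:
  fixes M N :: "('q::order, 'f::field) pmod"
  assumes ab: "abelian_subcat Cat" and M: "M \<in> Cat" and N: "N \<in> Cat"
  shows "\<exists>S\<in>Cat. \<exists>f g. short_exact M S N f g"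
proof -
  obtain S i1 i2 p1 p2 where S: "S \<in> Cat" and h1: "is_hom M S i1" and h2: "is_hom N S i2"
    and h3: "is_hom S M p1" and h4: "is_hom S N p2"
    and id: "\<And>q. p1 q * i1 q = 1\<^sub>m (fst M q) \<and> p2 q * i2 q = 1\<^sub>m (fst N q) \<and>
              i1 q * p1 q + i2 q * p2 q = 1\<^sub>m (fst S q)"
    using ab M N unfolding abelian_subcat_def by meson
  have "short_exact M S N i1 p2"
    unfolding short_exact_def
    using h1 h4 biprod_mats[OF is_homD(3)[OF h1] is_homD(3)[OF h2] is_homD(3)[OF h3] is_homD(3)[OF h4]] id
    by blast
  then show ?thesis using S by blast
qed

definition Gs :: "'q::order set set \<Rightarrow> 'q set set" where
  "Gs X = {U - V | U V. U \<in> X \<and> upset U \<and> V \<in> X \<and> upset V}"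

lemma upset_Int: "upset U \<Longrightarrow> upset V \<Longrightarrow> upset (U \<inter> V)"
  unfolding upset_def by blast
lemma upset_Un: "upset U \<Longrightarrow> upset V \<Longrightarrow> upset (U \<union> V)"
  unfolding upset_def by blast
lemma upset_empty: "upset {}"
  unfolding upset_def by blast
lemma upset_UNIV: "upset UNIV"
  unfolding upset_def by blast

lemma GsI: "U \<in> X \<Longrightarrow> upset U \<Longrightarrow> V \<in> X \<Longrightarrow> upset V \<Longrightarrow> U - V \<in> Gs X"
  unfolding Gs_def by blast

lemma GsE:
  assumes "a \<in> Gs X"
  obtains U V where "a = U - V" "U \<in> X" "upset U" "V \<in> X" "upset V"
  using assms unfolding Gs_def by blast

lemma Gs_semiring:
  assumes X: "Sigma_Algebra.algebra UNIV X"
  shows "semiring_of_sets UNIV (Gs X)"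
proof -
  interpret A: Sigma_Algebra.algebra UNIV X by fact
  show ?thesis
  proof
    show "Gs X \<subseteq> Pow UNIV" by simp
    have "{} - {} \<in> Gs X" by (rule GsI) (auto simp: upset_empty)
    then show "{} \<in> Gs X" by simp
    show "a \<inter> b \<in> Gs X" if ha: "a \<in> Gs X" and hb: "b \<in> Gs X" for a b
    proof -
      obtain U1 V1 where 1: "a = U1 - V1" "U1 \<in> X" "upset U1" "V1 \<in> X" "upset V1" using GsE[OF ha] by metis
      obtain U2 V2 where 2: "b = U2 - V2" "U2 \<in> X" "upset U2" "V2 \<in> X" "upset V2" using GsE[OF hb] by metis
      have eq: "a \<inter> b = (U1 \<inter> U2) - (V1 \<union> V2)" unfolding 1 2 by blast
      have "(U1 \<inter> U2) - (V1 \<union> V2) \<in> Gs X"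
        by (rule GsI) (use 1 2 upset_Int upset_Un in auto)
      then show ?thesis unfolding eq .
    qed
    show "\<exists>C\<subseteq>Gs X. finite C \<and> disjoint C \<and> a - b = \<Union>C" if ha: "a \<in> Gs X" and hb: "b \<in> Gs X" for a b
    proof -
      obtain U1 V1 where 1: "a = U1 - V1" "U1 \<in> X" "upset U1" "V1 \<in> X" "upset V1" using GsE[OF ha] by metis
      obtain U2 V2 where 2: "b = U2 - V2" "U2 \<in> X" "upset U2" "V2 \<in> X" "upset V2" using GsE[OF hb] by metis
      define c1 where "c1 = U1 - (V1 \<union> U2)"
      define c2 where "c2 = (U1 \<inter> U2 \<inter> V2) - V1"
      have c1G: "c1 \<in> Gs X" unfolding c1_def by (rule GsI) (use 1 2 upset_Un in auto)
      have c2G: "c2 \<in> Gs X" unfolding c2_def by (rule GsI) (use 1 2 upset_Int in auto)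
      have eq: "a - b = c1 \<union> c2" unfolding c1_def c2_def 1 2 by blast
      have dj: "c1 \<inter> c2 = {}" unfolding c1_def c2_def by blast
      have djC: "disjoint {c1, c2}" unfolding disjoint_def using dj by (auto simp: disjnt_def)
      have "{c1, c2} \<subseteq> Gs X" using c1G c2G by simp
      moreover have "a - b = \<Union>{c1, c2}" using eq by simp
      ultimately show ?thesis using djC by blast
    qed
  qed
qed

lemma Gs_XUp:
  assumes X: "Sigma_Algebra.algebra UNIV X"
  shows "Gs X \<subseteq> XUp X"
proof
  fix c assume "c \<in> Gs X"
  then obtain U V where 1: "c = U - V" "U \<in> X" "upset U" "V \<in> X" "upset V" unfolding Gs_def by blast
  have "U \<in> XUp X" "V \<in> XUp X" using 1 XUp_gen by auto
  then show "c \<in> XUp X" using 1 ring_of_sets.Diff[OF Sigma_Algebra.algebra.axioms(1)[OF XUp_algebra]] by simp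
qed

lemma XUp_generated:
  assumes X: "Sigma_Algebra.algebra UNIV X"
  shows "XUp X \<subseteq> semiring_of_sets.generated_ring (Gs X)"
proof -
  interpret S: semiring_of_sets UNIV "Gs X" by (rule Gs_semiring[OF X])
  interpret R: ring_of_sets UNIV S.generated_ring by (rule S.generating_ring)
  interpret A: Sigma_Algebra.algebra UNIV X by fact
  have UG: "UNIV \<in> Gs X" unfolding Gs_def using upset_UNIV upset_empty by blast
  have alg: "Sigma_Algebra.algebra UNIV S.generated_ring"
    by (rule Sigma_Algebra.algebra.intro[OF R.ring_of_sets_axioms]) (unfold_locales, rule S.generated_ringI_Basic[OF UG])
  have gens: "{U \<in> X. upset U} \<subseteq> S.generated_ring"
  proof
    fix U assume "U \<in> {U \<in> X. upset U}"
    then have "U - {} \<in> Gs X" unfolding Gs_def using upset_empty by blast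
    then show "U \<in> S.generated_ring" using S.generated_ringI_Basic by simp
  qed
  show ?thesis by (rule XUp_min[OF alg gens])
qed

lemma interval_enc:
  assumes X: "Sigma_Algebra.algebra UNIV X" and U: "U \<in> X" "upset U" and V: "V \<in> X" "upset V"
  shows "enc X 3 (\<le>) (\<lambda>q. if q \<in> V then 2 else if q \<in> U then 1 else (0::nat))"
proof -
  interpret A: Sigma_Algebra.algebra UNIV X by fact
  define e where "e = (\<lambda>q. if q \<in> V then 2 else if q \<in> U then 1 else (0::nat))"
  have f0: "e -` {0} = UNIV - (U \<union> V)" unfolding e_def by (auto split: if_splits)
  have f1: "e -` {1} = U - V" unfolding e_def by (auto split: if_splits)
  have f2: "e -` {2} = V" unfolding e_def by (auto split: if_splits)
  have "enc X 3 (\<le>) e"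
  proof (rule encI)
    show "e q < 3" for q unfolding e_def by auto
    show "e q \<le> e r" if "q \<le> r" for q r
      using U(2) V(2) that unfolding e_def upset_def by auto
    show "e -` {i} \<in> X" if "i < 3" for i
    proof -
      have x0: "UNIV - (U \<union> V) \<in> X" using U V by blast
      have x1: "U - V \<in> X" using U V by blast
      have "i = 0 \<or> i = 1 \<or> i = 2" using that by auto
      moreover have "e -` {0} \<in> X" unfolding f0 by (rule x0)
      moreover have "e -` {1} \<in> X" unfolding f1 by (rule x1)
      moreover have "e -` {2} \<in> X" unfolding f2 by (rule V(1))
      ultimately show ?thesis by blast
    qed
  qed auto
  then show ?thesis unfolding e_def .
qed

lemma HI_pullback:
  assumes X: "Sigma_Algebra.algebra UNIV X" and c: "content (XUp X) \<nu>" and E: "enc X n lp e"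
    and fM: "\<And>q. fst M q = d (e q)"
  shows "hilbert_integral \<nu> M = (\<Sum>i<n. of_nat (d i) * \<nu> (e -` {i}))"
proof (rule hilbert_partition[OF XUp_algebra c])
  show "\<forall>j\<in>{..<n}. e -` {j} \<in> XUp X" using fiber_XUp[OF X E] by blast
  show "disjoint_family_on (\<lambda>j. e -` {j}) {..<n}" unfolding disjoint_family_on_def by auto
  show "(\<Union>j\<in>{..<n}. e -` {j}) = UNIV" using encD(4)[OF E] by auto
  show "\<forall>j\<in>{..<n}. \<forall>q\<in>e -` {j}. fst M q = d j" using fM by auto
qed simp

lemma interval_module:
  assumes X: "Sigma_Algebra.algebra UNIV X" and cG: "c \<in> Gs X"
  shows "\<exists>I :: ('q::order, 'f::field) pmod. I \<in> VectX X \<and> fst I = (\<lambda>q. if q \<in> c then 1 else 0) \<and>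
     (\<forall>\<nu>. content (XUp X) \<nu> \<longrightarrow> hilbert_integral \<nu> I = \<nu> c)"
proof -
  obtain U V where c: "c = U - V" and U: "U \<in> X" "upset U" and V: "V \<in> X" "upset V" using GsE[OF cG] by metis
  define e where "e = (\<lambda>q. if q \<in> V then 2 else if q \<in> U then 1 else (0::nat))"
  have E: "enc X 3 (\<le>) e" unfolding e_def by (rule interval_enc[OF X U V])
  have f1: "e -` {1} = U - V" unfolding e_def by (auto split: if_splits)
  define I :: "('q, 'f) pmod" where "I = pullback e (ind_d 1) (ind_m 1)"
  have IV: "I \<in> VectX X" unfolding I_def by (rule pullback_VectX[OF E ind_functor[OF E]])
  have fI: "fst I q = ind_d 1 (e q)" for q unfolding I_def by simp
  have fI': "fst I = (\<lambda>q. if q \<in> c then 1 else 0)"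
  proof
    fix q
    have "e q = 1 \<longleftrightarrow> q \<in> c" using f1 c by auto
    then show "fst I q = (if q \<in> c then 1 else 0)" unfolding fI ind_d_def by simp
  qed
  have HI: "hilbert_integral \<nu> I = \<nu> c" if cn: "content (XUp X) \<nu>" for \<nu>
  proof -
    have "hilbert_integral \<nu> I = (\<Sum>i<3. of_nat (ind_d 1 i) * \<nu> (e -` {i}))"
      by (rule HI_pullback[OF X cn E fI])
    also have "\<dots> = \<nu> (e -` {1})"
      by (simp add: ind_d_def numeral_3_eq_3 lessThan_Suc)
    finally show ?thesis using f1 c by simp
  qed
  show ?thesis using IV fI' HI by blast
qed

lemma abelian_zero:
  assumes "abelian_subcat (Cat :: ('q::order, 'f::field) pmod set)"
  shows "(zero_pmod :: ('q, 'f) pmod) \<in> Cat"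
  using assms unfolding abelian_subcat_def by (elim conjE) assumption

lemma exists_ind_mod:
  assumes X: "Sigma_Algebra.algebra UNIV X" and ab: "abelian_subcat (VectX X :: ('q::order, 'f::field) pmod set)"
    and S: "S \<in> XUp X"
  shows "\<exists>N :: ('q, 'f) pmod. N \<in> VectX X \<and> fst N = (\<lambda>q. if q \<in> S then 1 else 0)"
proof -
  interpret G: semiring_of_sets UNIV "Gs X" by (rule Gs_semiring[OF X])
  have "S \<in> G.generated_ring" using XUp_generated[OF X] S by blast
  then obtain C where C: "finite C" "disjoint C" "C \<subseteq> Gs X" "S = \<Union>C" by (rule G.generated_ringE)
  have z: "(zero_pmod :: ('q, 'f) pmod) \<in> VectX X" by (rule abelian_zero[OF ab])
  have "C \<subseteq> Gs X \<Longrightarrow> disjoint C \<Longrightarrow> \<exists>N :: ('q, 'f) pmod. N \<in> VectX X \<and> fst N = (\<lambda>q. if q \<in> \<Union>C then 1 else 0)"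
    using C(1)
  proof (induction C rule: finite_induct)
    case empty
    show ?case using z by (intro exI[of _ zero_pmod]) (auto simp: zero_pmod_def)
  next
    case (insert c F)
    have dF: "disjoint F" using insert.prems(2) by (auto simp: disjoint_def pairwise_def)
    obtain NF :: "('q, 'f) pmod" where NF: "NF \<in> VectX X" "fst NF = (\<lambda>q. if q \<in> \<Union>F then 1 else 0)"
      using insert.IH insert.prems dF by auto
    obtain I :: "('q, 'f) pmod" where I: "I \<in> VectX X" "fst I = (\<lambda>q. if q \<in> c then 1 else 0)"
    proof -
      have "c \<in> Gs X" using insert.prems(1) by simp
      from interval_module[OF X this] have ex: "\<exists>I0 :: ('q, 'f) pmod.
        I0 \<in> VectX X \<and> fst I0 = (\<lambda>q. if q \<in> c then 1 else 0)"
        by (elim exE conjE) (rule exI, rule conjI, assumption, assumption)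
      from ex obtain I0 :: "('q, 'f) pmod" where h: "I0 \<in> VectX X \<and> fst I0 = (\<lambda>q. if q \<in> c then 1 else 0)"
        by (rule exE)
      show ?thesis by (rule that[OF conjunct1[OF h] conjunct2[OF h]])
    qed
    obtain B f g where B: "B \<in> VectX X" and se: "short_exact I B NF f g"
      using biprod_obtain[OF ab I(1) NF(1)] by blast
    have dj: "c \<inter> \<Union>F = {}"
    proof (rule ccontr)
      assume "c \<inter> \<Union>F \<noteq> {}"
      then obtain x c' where x: "x \<in> c" "x \<in> c'" "c' \<in> F" by blast
      have "c \<noteq> c'" using x(3) insert.hyps(2) by blast
      then have "disjnt c c'" using insert.prems(2) x(3) unfolding disjoint_def pairwise_def by blast
      then show False using x unfolding disjnt_def by blast
    qed
    have "fst B = (\<lambda>q. if q \<in> \<Union>(insert c F) then 1 else 0)"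
    proof
      fix q
      have "fst B q = fst I q + fst NF q" by (rule short_exact_dims[OF se])
      then show "fst B q = (if q \<in> \<Union>(insert c F) then 1 else 0)" using I(2) NF(2) dj by auto
    qed
    then show ?case using B by blast
  qed
  then show ?thesis using C by simp
qed

lemma HI_exact:
  fixes A B C :: "('q::order, 'f::field) pmod"
  assumes X: "Sigma_Algebra.algebra UNIV X" and c: "content (XUp X) \<nu>"
    and A: "A \<in> VectX X" and B: "B \<in> VectX X" and C: "C \<in> VectX X"
    and dims: "\<And>q. fst B q = fst A q + fst C q"
  shows "hilbert_integral \<nu> B = hilbert_integral \<nu> A + hilbert_integral \<nu> C"
proof -
  obtain nA lpA eA dA and mA :: "nat \<Rightarrow> nat \<Rightarrow> 'f mat" where EA: "enc X nA lpA eA"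
    and IA: "is_iso A (pullback eA dA mA)"
    using A unfolding VectX_def by (auto elim: fin_encodedE)
  obtain nB lpB eB dB and mB :: "nat \<Rightarrow> nat \<Rightarrow> 'f mat" where EB: "enc X nB lpB eB"
    and IB: "is_iso B (pullback eB dB mB)"
    using B unfolding VectX_def by (auto elim: fin_encodedE)
  obtain nC lpC eC dC and mC :: "nat \<Rightarrow> nat \<Rightarrow> 'f mat" where EC: "enc X nC lpC eC"
    and IC: "is_iso C (pullback eC dC mC)"
    using C unfolding VectX_def by (auto elim: fin_encodedE)
  have fA: "fst A q = dA (eA q)" for q using iso_dims[OF IA, of q] by simp
  have fB: "fst B q = dB (eB q)" for q using iso_dims[OF IB, of q] by simp
  have fC: "fst C q = dC (eC q)" for q using iso_dims[OF IC, of q] by simp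
  define J where "J = {..<nA} \<times> ({..<nB} \<times> {..<nC})"
  define Bs where "Bs = (\<lambda>t. eA -` {fst t} \<inter> eB -` {fst (snd t)} \<inter> eC -` {snd (snd t)})"
  have fin: "finite J" unfolding J_def by simp
  interpret XA: Sigma_Algebra.algebra UNIV "XUp X" by (rule XUp_algebra)
  have BsX: "\<forall>t\<in>J. Bs t \<in> XUp X"
    unfolding Bs_def using fiber_XUp[OF X EA] fiber_XUp[OF X EB] fiber_XUp[OF X EC] by blast
  have dis: "disjoint_family_on Bs J" unfolding disjoint_family_on_def Bs_def by auto
  have cov: "(\<Union>t\<in>J. Bs t) = UNIV"
  proof -
    have "q \<in> Bs (eA q, eB q, eC q)" "(eA q, eB q, eC q) \<in> J" for q
      unfolding Bs_def J_def using encD(4)[OF EA] encD(4)[OF EB] encD(4)[OF EC] by auto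
    then show ?thesis by blast
  qed
  have HA: "hilbert_integral \<nu> A = (\<Sum>t\<in>J. of_nat (dA (fst t)) * \<nu> (Bs t))"
    by (rule hilbert_partition[OF XUp_algebra c fin BsX dis cov]) (auto simp: Bs_def fA)
  have HB: "hilbert_integral \<nu> B = (\<Sum>t\<in>J. of_nat (dB (fst (snd t))) * \<nu> (Bs t))"
    by (rule hilbert_partition[OF XUp_algebra c fin BsX dis cov]) (auto simp: Bs_def fB)
  have HC: "hilbert_integral \<nu> C = (\<Sum>t\<in>J. of_nat (dC (snd (snd t))) * \<nu> (Bs t))"
    by (rule hilbert_partition[OF XUp_algebra c fin BsX dis cov]) (auto simp: Bs_def fC)
  have "(\<Sum>t\<in>J. of_nat (dB (fst (snd t))) * \<nu> (Bs t)) =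
        (\<Sum>t\<in>J. of_nat (dA (fst t)) * \<nu> (Bs t) + of_nat (dC (snd (snd t))) * \<nu> (Bs t))"
  proof (rule sum.cong[OF refl])
    fix t assume "t \<in> J"
    show "of_nat (dB (fst (snd t))) * \<nu> (Bs t) = of_nat (dA (fst t)) * \<nu> (Bs t) + of_nat (dC (snd (snd t))) * \<nu> (Bs t)"
    proof (cases "Bs t = {}")
      case True
      then show ?thesis using c unfolding content_def by simp
    next
      case False
      then obtain q where q: "q \<in> Bs t" by blast
      have "dB (fst (snd t)) = dA (fst t) + dC (snd (snd t))"
        using dims[of q] q unfolding fA fB fC Bs_def by simp
      then show ?thesis by (simp add: distrib_right)
    qed
  qed
  then show ?thesis unfolding HA HB HC by (simp add: sum.distrib)
qed

lemma additive_amplitudeI: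
  assumes z: "\<And>Z. Z \<in> Cat \<Longrightarrow> fst Z = (\<lambda>_. 0) \<Longrightarrow> \<alpha> Z = (0::ennreal)"
    and e: "\<And>A B C f g. A \<in> Cat \<Longrightarrow> B \<in> Cat \<Longrightarrow> C \<in> Cat \<Longrightarrow> short_exact A B C f g \<Longrightarrow> \<alpha> B = \<alpha> A + \<alpha> C"
  shows "additive_amplitude Cat \<alpha>"
proof -
  have amp: "amplitude Cat \<alpha>"
    unfolding amplitude_def
  proof (intro conjI ballI allI impI)
    fix Z assume "Z \<in> Cat" "fst Z = (\<lambda>_. 0)"
    then show "\<alpha> Z = 0" by (rule z)
  next
    fix A B C f g assume h: "A \<in> Cat" "B \<in> Cat" "C \<in> Cat" "short_exact A B C f g"
    have eq: "\<alpha> B = \<alpha> A + \<alpha> C" by (rule e[OF h])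
    show "\<alpha> A \<le> \<alpha> B" unfolding eq by simp
    show "\<alpha> C \<le> \<alpha> B" unfolding eq by simp
    show "\<alpha> B \<le> \<alpha> A + \<alpha> C" unfolding eq by simp
  qed
  show ?thesis unfolding additive_amplitude_def using amp e by blast
qed

theorem mainTheorem1:
  fixes X :: "'q::order set set"
  assumes "Sigma_Algebra.algebra UNIV X"
    and "abelian_subcat (VectX X :: ('q, 'f::field) pmod set)"
  shows "(\<forall>\<nu>. content (XUp X) \<nu> \<longrightarrow>
            additive_amplitude (VectX X :: ('q, 'f) pmod set) (hilbert_integral \<nu>))
       \<and> (\<forall>\<nu>1 \<nu>2. content (XUp X) \<nu>1 \<and> content (XUp X) \<nu>2 \<and>
            (\<forall>M \<in> (VectX X :: ('q, 'f) pmod set). hilbert_integral \<nu>1 M = hilbert_integral \<nu>2 M)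
            \<longrightarrow> (\<forall>U \<in> XUp X. \<nu>1 U = \<nu>2 U))
       \<and> (\<forall>\<alpha>. additive_amplitude (VectX X :: ('q, 'f) pmod set) \<alpha> \<longrightarrow>
            (\<exists>\<nu>. content (XUp X) \<nu> \<and>
                 (\<forall>M \<in> (VectX X :: ('q, 'f) pmod set). \<alpha> M = hilbert_integral \<nu> M)))"
proof -
  note X = assms(1) and ab = assms(2)
  have z: "(zero_pmod :: ('q, 'f) pmod) \<in> VectX X" by (rule abelian_zero[OF ab])
  have P1: "\<forall>\<nu>. content (XUp X) \<nu> \<longrightarrow>
            additive_amplitude (VectX X :: ('q, 'f) pmod set) (hilbert_integral \<nu>)"
  proof (intro allI impI)
    fix \<nu> :: "'q set \<Rightarrow> ennreal" assume c: "content (XUp X) \<nu>"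
    show "additive_amplitude (VectX X :: ('q, 'f) pmod set) (hilbert_integral \<nu>)"
    proof (rule additive_amplitudeI)
      fix Z :: "('q, 'f) pmod" assume "Z \<in> VectX X" "fst Z = (\<lambda>_. 0)"
      then show "hilbert_integral \<nu> Z = 0" unfolding hilbert_integral_def by simp
    next
      fix A B C :: "('q, 'f) pmod" and f g
      assume A: "A \<in> VectX X" and B: "B \<in> VectX X" and C: "C \<in> VectX X" and se: "short_exact A B C f g"
      show "hilbert_integral \<nu> B = hilbert_integral \<nu> A + hilbert_integral \<nu> C"
        by (rule HI_exact[OF X c A B C short_exact_dims[OF se]])
    qed
  qed
  have P2: "\<forall>\<nu>1 \<nu>2. content (XUp X) \<nu>1 \<and> content (XUp X) \<nu>2 \<and>
            (\<forall>M \<in> (VectX X :: ('q, 'f) pmod set). hilbert_integral \<nu>1 M = hilbert_integral \<nu>2 M)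
            \<longrightarrow> (\<forall>U \<in> XUp X. \<nu>1 U = \<nu>2 U)"
  proof (intro allI impI ballI)
    fix \<nu>1 \<nu>2 :: "'q set \<Rightarrow> ennreal" and U
    assume h: "content (XUp X) \<nu>1 \<and> content (XUp X) \<nu>2 \<and>
            (\<forall>M \<in> (VectX X :: ('q, 'f) pmod set). hilbert_integral \<nu>1 M = hilbert_integral \<nu>2 M)"
      and U: "U \<in> XUp X"
    have c1: "content (XUp X) \<nu>1" and c2: "content (XUp X) \<nu>2"
      and eqM: "\<And>M. M \<in> (VectX X :: ('q, 'f) pmod set) \<Longrightarrow> hilbert_integral \<nu>1 M = hilbert_integral \<nu>2 M"
      using h by auto
    have onG: "\<nu>1 c = \<nu>2 c" if cG: "c \<in> Gs X" for c
    proof -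
      from interval_module[OF X cG] have ex: "\<exists>I :: ('q, 'f) pmod. I \<in> VectX X \<and>
          (\<forall>\<nu>. content (XUp X) \<nu> \<longrightarrow> hilbert_integral \<nu> I = \<nu> c)"
        by (elim exE conjE) (rule exI, rule conjI, assumption, assumption)
      from ex obtain I :: "('q, 'f) pmod" where hI: "I \<in> VectX X \<and>
          (\<forall>\<nu>. content (XUp X) \<nu> \<longrightarrow> hilbert_integral \<nu> I = \<nu> c)" by (rule exE)
      have "\<nu>1 c = hilbert_integral \<nu>1 I" using hI c1 by simp
      also have "\<dots> = hilbert_integral \<nu>2 I" using hI eqM by simp
      also have "\<dots> = \<nu>2 c" using hI c2 by simp
      finally show ?thesis .
    qed
    interpret G: semiring_of_sets UNIV "Gs X" by (rule Gs_semiring[OF X])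
    have "U \<in> G.generated_ring" using XUp_generated[OF X] U by blast
    then obtain C where C: "finite C" "disjoint C" "C \<subseteq> Gs X" "U = \<Union>C" by (rule G.generated_ringE)
    have CX: "\<forall>c\<in>C. c \<in> XUp X" using C(3) Gs_XUp[OF X] by blast
    have dfam: "disjoint_family_on (\<lambda>x. x) C"
      using C(2) unfolding disjoint_family_on_def disjoint_def pairwise_def disjnt_def by blast
    have UU: "U = (\<Union>c\<in>C. c)" using C(4) by simp
    have "\<nu>1 U = (\<Sum>c\<in>C. \<nu>1 c)" unfolding UU by (rule content_UN[OF XUp_algebra c1 C(1) CX dfam])
    also have "\<dots> = (\<Sum>c\<in>C. \<nu>2 c)" using onG C(3) by (intro sum.cong) auto
    also have "\<dots> = \<nu>2 U" unfolding UU by (rule content_UN[OF XUp_algebra c2 C(1) CX dfam, symmetric])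
    finally show "\<nu>1 U = \<nu>2 U" .
  qed
  have P3: "\<forall>\<alpha>. additive_amplitude (VectX X :: ('q, 'f) pmod set) \<alpha> \<longrightarrow>
            (\<exists>\<nu>. content (XUp X) \<nu> \<and>
                 (\<forall>M \<in> (VectX X :: ('q, 'f) pmod set). \<alpha> M = hilbert_integral \<nu> M))"
  proof (intro allI impI)
    fix \<alpha> :: "('q, 'f) pmod \<Rightarrow> ennreal" assume aa: "additive_amplitude (VectX X) \<alpha>"
    have amp: "amplitude (VectX X) \<alpha>" using aa unfolding additive_amplitude_def by (elim conjE)
    define ind :: "'q set \<Rightarrow> 'q \<Rightarrow> nat" where "ind = (\<lambda>S q. if q \<in> S then 1 else 0)"
    define Nof where "Nof = (\<lambda>S. SOME N :: ('q, 'f) pmod. N \<in> VectX X \<and> fst N = ind S)"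
    define \<nu> where "\<nu> = (\<lambda>S. \<alpha> (Nof S))"
    have Nof: "Nof S \<in> VectX X \<and> fst (Nof S) = ind S" if S: "S \<in> XUp X" for S
      unfolding Nof_def ind_def by (rule someI_ex) (rule exists_ind_mod[OF X ab S])
    have nueq: "\<nu> S = \<alpha> N" if S: "S \<in> XUp X" and N: "N \<in> VectX X" and fN: "fst N = ind S" for S N
    proof -
      have "\<alpha> (Nof S) = \<alpha> N" by (rule dim_dep[OF X aa z]) (use Nof[OF S] N fN in auto)
      then show ?thesis unfolding \<nu>_def by simp
    qed
    interpret XA: Sigma_Algebra.algebra UNIV "XUp X" by (rule XUp_algebra)
    have cont: "content (XUp X) \<nu>"
      unfolding content_def
    proof (intro conjI ballI impI)
      have e: "{} \<in> XUp X" by simp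
      show "\<nu> {} = 0" unfolding \<nu>_def
        by (rule amp_zero[OF amp]) (use Nof[OF e] in \<open>auto simp: ind_def\<close>)
    next
      fix S T assume S: "S \<in> XUp X" and T: "T \<in> XUp X" and dj: "S \<inter> T = {}"
      obtain B f g where B: "B \<in> VectX X" and se: "short_exact (Nof S) B (Nof T) f g"
        using biprod_obtain[OF ab conjunct1[OF Nof[OF S]] conjunct1[OF Nof[OF T]]] by blast
      have "\<alpha> B = \<alpha> (Nof S) + \<alpha> (Nof T)"
        by (rule add_amp[OF aa conjunct1[OF Nof[OF S]] B conjunct1[OF Nof[OF T]] se])
      moreover have "fst B = ind (S \<union> T)"
      proof
        fix q
        have "fst B q = fst (Nof S) q + fst (Nof T) q" by (rule short_exact_dims[OF se])
        then show "fst B q = ind (S \<union> T) q" using Nof[OF S] Nof[OF T] dj unfolding ind_def by auto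
      qed
      moreover have "S \<union> T \<in> XUp X" using S T by blast
      ultimately show "\<nu> (S \<union> T) = \<nu> S + \<nu> T" using nueq B unfolding \<nu>_def by simp
    qed
    have rep: "\<forall>M \<in> (VectX X :: ('q, 'f) pmod set). \<alpha> M = hilbert_integral \<nu> M"
    proof
      fix M :: "('q, 'f) pmod" assume M: "M \<in> VectX X"
      obtain n lp e d and m :: "nat \<Rightarrow> nat \<Rightarrow> 'f mat" where E: "enc X n lp e"
        and F: "is_functor {..<n} lp d m" and I: "is_iso M (pullback e d m)"
        using M unfolding VectX_def by (auto elim: fin_encodedE)
      have fM: "fst M q = d (e q)" for q using iso_dims[OF I, of q] by simp
      have "\<alpha> M = \<alpha> (pullback e d m)"
        by (rule alpha_iso[OF aa z M _ I]) (rule pullback_VectX[OF E F])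
      also have "\<dots> = (\<Sum>i<n. of_nat (d i) * \<alpha> (pullback e (ind_d i) (ind_m i) :: ('q, 'f) pmod))"
        by (rule K_formula[OF aa z E F])
      also have "\<dots> = (\<Sum>i<n. of_nat (d i) * \<nu> (e -` {i}))"
      proof (rule sum.cong[OF refl])
        fix i assume "i \<in> {..<n}"
        have "\<nu> (e -` {i}) = \<alpha> (pullback e (ind_d i) (ind_m i) :: ('q, 'f) pmod)"
          by (rule nueq[OF fiber_XUp[OF X E] pullback_VectX[OF E ind_functor[OF E]]])
            (auto simp: ind_def ind_d_def)
        then show "of_nat (d i) * \<alpha> (pullback e (ind_d i) (ind_m i) :: ('q, 'f) pmod) = of_nat (d i) * \<nu> (e -` {i})"
          by simp
      qed
      also have "\<dots> = hilbert_integral \<nu> M" by (rule HI_pullback[OF X cont E fM, symmetric])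
      finally show "\<alpha> M = hilbert_integral \<nu> M" .
    qed
    show "\<exists>\<nu>. content (XUp X) \<nu> \<and> (\<forall>M \<in> (VectX X :: ('q, 'f) pmod set). \<alpha> M = hilbert_integral \<nu> M)"
      using cont rep by blast
  qed
  show ?thesis by (rule conjI[OF P1 conjI[OF P2 P3]])
qed

end
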